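(* Let $(N,J,h)$ be a 2-dimensional almost Norden manifold of constant sectional curvature $k'$ and let $(S^1(N),\varphi,\xi,\eta,g)$ be its $S^1$-solvable extension (constructed as in the context). If $(N,J,h)$ is a K\"ahler-Norden manifold, then \[ \tau=2(k'\cos2t+1),\qquad \tau^{**}=2(k'\cos2t-1). \]
   Context: An almost Norden manifold $(N,J,h)$ is a manifold $N$ with an almost complex structure $J$ and a pseudo-Riemannian metric $h$ satisfying $h(Jx,Jy)=-h(x,y)$; $\widetilde{h}(x,y)=h(x,Jy)$; it is K\"ahler-Norden if $\nabla'J=0$ for its Levi-Civita connection $\nabla'$; constant sectional curvature $k'$ means its curvature tensor is $R'(x,y,z,w)=k'\{h(y,z)h(x,w)-h(x,z)h(y,w)\}$. The $S^1$-solvable extension is $S^1(N)=\mathbb{R}^+\times N$, $t$ the coordinate on $\mathbb{R}^+=(0,\infty)$, with $\xi=\tfrac{\mathrm{d}}{\mathrm{d}t}$, $\eta=\mathrm{d}t$, $\varphi=J$ on vectors tangent to $N$, $\varphi\xi=0$, and metric $g=\mathrm{d}t^2+\cos2t\,h-\sin2t\,\widetilde{h}$. With $\nabla$ the Levi-Civita connection of $g$, $R(x,y)=\nabla_x\nabla_y-\nabla_y\nabla_x-\nabla_{[x,y]}$, $R(x,y,z,w)=g(R(x,y)z,w)$, and for a basis $\{e_i\}$ with $(g^{ij})$ the inverse of $(g(e_i,e_j))$ (summation convention): $\rho(y,z)=g^{ij}R(e_i,y,z,e_j)$, $\rho^*(y,z)=g^{ij}R(e_i,y,z,\varphi e_j)$,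 $\tau=g^{ij}\rho(e_i,e_j)$, $\tau^{**}=g^{ij}\rho^*(e_i,\varphi e_j)$. *)

theory Defs
  imports "HOL-Analysis.Analysis"
begin

text \<open>A manifold of dimension n is modelled by an open
  coordinate domain U of a Euclidean space 'a with DIM('a) = n; tensor fields are
  given pointwise on U (p is the point, the remaining arguments are tangent vectors,
  tangent spaces being identified with 'a).  Coordinate fields are the constant
  vector fields; Basis is the coordinate basis.\<close>

fun Ck :: "nat \<Rightarrow> 'a::euclidean_space set \<Rightarrow> ('a \<Rightarrow> real) \<Rightarrow> bool" where
  "Ck 0 U f = continuous_on U f"
| "Ck (Suc k) U f = (f differentiable_on U \<and>
      (\<forall>e\<in>Basis. Ck k U (\<lambda>p. frechet_derivative f (at p) e)))"

definition smooth_fun_on :: "'a::euclidean_space set \<Rightarrow> ('a \<Rightarrow> real) \<Rightarrow> bool" where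
  "smooth_fun_on U f \<longleftrightarrow> (\<forall>k. Ck k U f)"

text \<open>Christoffel map of a metric g (Koszul formula for coordinate fields):
  g(Gamma(x,y), z) = (x(g(y,z)) + y(g(x,z)) - z(g(x,y)))/2.\<close>
definition christ :: "('a::euclidean_space \<Rightarrow> 'a \<Rightarrow> 'a \<Rightarrow> real) \<Rightarrow> 'a \<Rightarrow> 'a \<Rightarrow> 'a \<Rightarrow> 'a" where
  "christ g p x y = (THE v. \<forall>z. g p v z =
     (frechet_derivative (\<lambda>q. g q y z) (at p) x
      + frechet_derivative (\<lambda>q. g q x z) (at p) y
      - frechet_derivative (\<lambda>q. g q x y) (at p) z) / 2)"

definition lc_cov :: "('a::euclidean_space \<Rightarrow> 'a \<Rightarrow> 'a \<Rightarrow> real) \<Rightarrow> ('a \<Rightarrow> 'a) \<Rightarrow> ('a \<Rightarrow> 'a) \<Rightarrow> 'a \<Rightarrow> 'a" where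
  "lc_cov g X Y p = frechet_derivative Y (at p) (X p) + christ g p (X p) (Y p)"

definition lie :: "('a::euclidean_space \<Rightarrow> 'a) \<Rightarrow> ('a \<Rightarrow> 'a) \<Rightarrow> 'a \<Rightarrow> 'a" where
  "lie X Y p = frechet_derivative Y (at p) (X p) - frechet_derivative X (at p) (Y p)"

definition curv_op :: "('a::euclidean_space \<Rightarrow> 'a \<Rightarrow> 'a \<Rightarrow> real) \<Rightarrow> ('a \<Rightarrow> 'a) \<Rightarrow> ('a \<Rightarrow> 'a) \<Rightarrow> ('a \<Rightarrow> 'a) \<Rightarrow> 'a \<Rightarrow> 'a" where
  "curv_op g X Y Z p = lc_cov g X (lc_cov g Y Z) p - lc_cov g Y (lc_cov g X Z) p - lc_cov g (lie X Y) Z p"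

text \<open>Curvature tensor R(x,y,z,w) = g(R(x,y)z, w) at p (tensor evaluated via
  coordinate (constant) extensions of the tangent vectors).\<close>
definition curv :: "('a::euclidean_space \<Rightarrow> 'a \<Rightarrow> 'a \<Rightarrow> real) \<Rightarrow> 'a \<Rightarrow> 'a \<Rightarrow> 'a \<Rightarrow> 'a \<Rightarrow> 'a \<Rightarrow> real" where
  "curv g p x y z w = g p (curv_op g (\<lambda>_. x) (\<lambda>_. y) (\<lambda>_. z) p) w"

definition gram_inv :: "('a::euclidean_space \<Rightarrow> 'a \<Rightarrow> 'a \<Rightarrow> real) \<Rightarrow> 'a \<Rightarrow> 'a \<Rightarrow> 'a \<Rightarrow> real" where
  "gram_inv g p = (THE G. (\<forall>i\<in>Basis. \<forall>j\<in>Basis.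
       (\<Sum>k\<in>Basis. G i k * g p k j) = (if i = j then 1 else 0))
     \<and> (\<forall>i j. i \<notin> Basis \<or> j \<notin> Basis \<longrightarrow> G i j = 0))"

definition mtrace :: "('a::euclidean_space \<Rightarrow> 'a \<Rightarrow> 'a \<Rightarrow> real) \<Rightarrow> 'a \<Rightarrow> ('a \<Rightarrow> 'a \<Rightarrow> real) \<Rightarrow> real" where
  "mtrace g p B = (\<Sum>i\<in>Basis. \<Sum>j\<in>Basis. gram_inv g p i j * B i j)"

definition ricci :: "('a::euclidean_space \<Rightarrow> 'a \<Rightarrow> 'a \<Rightarrow> real) \<Rightarrow> 'a \<Rightarrow> 'a \<Rightarrow> 'a \<Rightarrow> real" where
  "ricci g p y z = mtrace g p (\<lambda>i j. curv g p i y z j)"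

definition scal :: "('a::euclidean_space \<Rightarrow> 'a \<Rightarrow> 'a \<Rightarrow> real) \<Rightarrow> 'a \<Rightarrow> real" where
  "scal g p = mtrace g p (\<lambda>i j. ricci g p i j)"

definition ricci_star :: "('a::euclidean_space \<Rightarrow> 'a \<Rightarrow> 'a \<Rightarrow> real) \<Rightarrow> ('a \<Rightarrow> 'a \<Rightarrow> 'a) \<Rightarrow> 'a \<Rightarrow> 'a \<Rightarrow> 'a \<Rightarrow> real" where
  "ricci_star g phi p y z = mtrace g p (\<lambda>i j. curv g p i y z (phi p j))"

definition tau_ss :: "('a::euclidean_space \<Rightarrow> 'a \<Rightarrow> 'a \<Rightarrow> real) \<Rightarrow> ('a \<Rightarrow> 'a \<Rightarrow> 'a) \<Rightarrow> 'a \<Rightarrow> real" where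
  "tau_ss g phi p = mtrace g p (\<lambda>i j. ricci_star g phi p i (phi p j))"

definition almost_norden :: "'a::euclidean_space set \<Rightarrow> ('a \<Rightarrow> 'a \<Rightarrow> 'a \<Rightarrow> real) \<Rightarrow> ('a \<Rightarrow> 'a \<Rightarrow> 'a) \<Rightarrow> bool" where
  "almost_norden U h J \<longleftrightarrow> open U \<and>
     (\<forall>p\<in>U. bilinear (h p) \<and> (\<forall>x y. h p x y = h p y x)
        \<and> (\<forall>x. (\<forall>y. h p x y = 0) \<longrightarrow> x = 0)
        \<and> linear (J p) \<and> (\<forall>x. J p (J p x) = - x)
        \<and> (\<forall>x y. h p (J p x) (J p y) = - h p x y))
     \<and> (\<forall>x y. smooth_fun_on U (\<lambda>p. h p x y))
     \<and> (\<forall>x y. smooth_fun_on U (\<lambda>p. J p x \<bullet> y))"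

definition kaehler_norden :: "'a::euclidean_space set \<Rightarrow> ('a \<Rightarrow> 'a \<Rightarrow> 'a \<Rightarrow> real) \<Rightarrow> ('a \<Rightarrow> 'a \<Rightarrow> 'a) \<Rightarrow> bool" where
  "kaehler_norden U h J \<longleftrightarrow> almost_norden U h J \<and>
     (\<forall>p\<in>U. \<forall>x y. lc_cov h (\<lambda>_. x) (\<lambda>q. J q y) p - J p (lc_cov h (\<lambda>_. x) (\<lambda>_. y) p) = 0)"

definition const_sec_curv :: "'a::euclidean_space set \<Rightarrow> ('a \<Rightarrow> 'a \<Rightarrow> 'a \<Rightarrow> real) \<Rightarrow> real \<Rightarrow> bool" where
  "const_sec_curv U h k \<longleftrightarrow> (\<forall>p\<in>U. \<forall>x y z w.
     curv h p x y z w = k * (h p y z * h p x w - h p x z * h p y w))"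

text \<open>S^1-solvable extension on R^+ \<times> U, points (t,p), tangent vectors (s,x) = s d/dt + x.\<close>
definition s1_metric :: "('a::euclidean_space \<Rightarrow> 'a \<Rightarrow> 'a \<Rightarrow> real) \<Rightarrow> ('a \<Rightarrow> 'a \<Rightarrow> 'a)
    \<Rightarrow> real \<times> 'a \<Rightarrow> real \<times> 'a \<Rightarrow> real \<times> 'a \<Rightarrow> real" where
  "s1_metric h J P X Y = fst X * fst Y
     + cos (2 * fst P) * h (snd P) (snd X) (snd Y)
     - sin (2 * fst P) * h (snd P) (snd X) (J (snd P) (snd Y))"

definition s1_phi :: "('a::euclidean_space \<Rightarrow> 'a \<Rightarrow> 'a) \<Rightarrow> real \<times> 'a \<Rightarrow> real \<times> 'a \<Rightarrow> real \<times> 'a" where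
  "s1_phi J P X = (0, J (snd P) (snd X))"

definition s1_xi :: "real \<times> 'a::euclidean_space" where "s1_xi = (1, 0)"
definition s1_eta :: "real \<times> 'a::euclidean_space \<Rightarrow> real" where "s1_eta X = fst X"

end

theory Submission
  imports Defs
begin


lemma diff_transform_open:
  assumes "f differentiable (at x)" "open S" "x \<in> S" "\<And>y. y \<in> S \<Longrightarrow> f y = g y"
  shows "g differentiable (at x)"
  using assms has_derivative_transform_within_open unfolding differentiable_def by blast

lemma fd_cong_open:
  assumes "open S" "x \<in> S" "\<And>y. y \<in> S \<Longrightarrow> f y = g y"
  shows "frechet_derivative f (at x) = frechet_derivative g (at x)"
proof -
  have "(f has_derivative D) (at x) \<longleftrightarrow> (g has_derivative D) (at x)" for D
    using assms has_derivative_transform_within_open[of f D x UNIV S g]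
      has_derivative_transform_within_open[of g D x UNIV S f] by auto
  then show ?thesis unfolding frechet_derivative_def by simp
qed

lemma fd_linear_at:
  assumes "f differentiable (at x)"
  shows "linear (frechet_derivative f (at x))"
  using assms linear_frechet_derivative by blast

lemma sum_Basis_prod_real:
  fixes f :: "('a::euclidean_space \<times> 'b::euclidean_space) \<Rightarrow> real"
  shows "sum f Basis = sum (\<lambda>i. f (i, 0)) Basis + sum (\<lambda>i. f (0, i)) Basis"
proof -
  have "inj_on (\<lambda>u. (u::'a, 0::'b)) Basis" "inj_on (\<lambda>u. (0::'a, u::'b)) Basis"
    by (auto intro!: inj_onI Pair_inject)
  thus ?thesis
    unfolding Basis_prod_def
    by (subst sum.union_disjoint) (auto simp: Basis_prod_def sum.reindex)
qed

lemma sum_Basis_real_prod: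
  fixes f :: "(real \<times> 'b::euclidean_space) \<Rightarrow> real"
  shows "sum f Basis = f (1,0) + sum (\<lambda>i. f (0, i)) Basis"
  by (simp add: sum_Basis_prod_real)

definition Dh :: "('a::euclidean_space \<Rightarrow> 'a \<Rightarrow> 'a \<Rightarrow> real) \<Rightarrow> 'a \<Rightarrow> 'a \<Rightarrow> 'a \<Rightarrow> 'a \<Rightarrow> real" where
  "Dh h x y q v = frechet_derivative (\<lambda>q. h q x y) (at q) v"
definition DJ :: "('a::euclidean_space \<Rightarrow> 'a \<Rightarrow> 'a) \<Rightarrow> 'a \<Rightarrow> 'a \<Rightarrow> 'a \<Rightarrow> 'a" where
  "DJ J z q v = frechet_derivative (\<lambda>q. J q z) (at q) v"
definition DhJ :: "('a::euclidean_space \<Rightarrow> 'a \<Rightarrow> 'a \<Rightarrow> real) \<Rightarrow> ('a \<Rightarrow> 'a \<Rightarrow> 'a) \<Rightarrow> 'a \<Rightarrow> 'a \<Rightarrow> 'a \<Rightarrow> 'a \<Rightarrow> real" where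
  "DhJ h J y z q v = frechet_derivative (\<lambda>q. h q y (J q z)) (at q) v"
definition DGm :: "('a::euclidean_space \<Rightarrow> 'a \<Rightarrow> 'a \<Rightarrow> real) \<Rightarrow> 'a \<Rightarrow> 'a \<Rightarrow> 'a \<Rightarrow> 'a \<Rightarrow> 'a" where
  "DGm h y z q v = frechet_derivative (\<lambda>q. christ h q y z) (at q) v"
definition Kz :: "('a::euclidean_space \<Rightarrow> 'a \<Rightarrow> 'a \<Rightarrow> real) \<Rightarrow> 'a \<Rightarrow> 'a \<Rightarrow> 'a \<Rightarrow> 'a \<Rightarrow> real" where
  "Kz h q x y w = (Dh h y w q x + Dh h x w q y - Dh h x y q w) / 2"

locale S1ctx =
  fixes U :: "'a::euclidean_space set" and h :: "'a \<Rightarrow> 'a \<Rightarrow> 'a \<Rightarrow> real"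
    and J :: "'a \<Rightarrow> 'a \<Rightarrow> 'a" and e1 e2 :: 'a and k' :: real
  assumes AN: "almost_norden U h J" and KN: "kaehler_norden U h J"
    and CS: "const_sec_curv U h k'" and B2: "Basis = {e1, e2}" and ne: "e1 \<noteq> e2"
begin

lemma openU: "open U" using AN unfolding almost_norden_def by blast

lemma hbil: "q \<in> U \<Longrightarrow> bilinear (h q)" using AN unfolding almost_norden_def by blast
lemma hsym: "q \<in> U \<Longrightarrow> h q x y = h q y x" using AN unfolding almost_norden_def by blast
lemma hnd: "q \<in> U \<Longrightarrow> (\<And>y. h q x y = 0) \<Longrightarrow> x = 0" using AN unfolding almost_norden_def by blast
lemma Jlin: "q \<in> U \<Longrightarrow> linear (J q)" using AN unfolding almost_norden_def by blast
lemma JJ[simp]: "q \<in> U \<Longrightarrow> J q (J q x) = - x" using AN unfolding almost_norden_def by blast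
lemma hJJ[simp]: "q \<in> U \<Longrightarrow> h q (J q x) (J q y) = - h q x y" using AN unfolding almost_norden_def by blast
lemma hsm: "smooth_fun_on U (\<lambda>p. h p x y)" using AN unfolding almost_norden_def by blast
lemma Jsm: "smooth_fun_on U (\<lambda>p. J p x \<bullet> y)" using AN unfolding almost_norden_def by blast

lemma hl_add[simp]: "q \<in> U \<Longrightarrow> h q (x + y) z = h q x z + h q y z" by (simp add: hbil bilinear_ladd)
lemma hr_add[simp]: "q \<in> U \<Longrightarrow> h q z (x + y) = h q z x + h q z y" by (simp add: hbil bilinear_radd)
lemma hl_sub[simp]: "q \<in> U \<Longrightarrow> h q (x - y) z = h q x z - h q y z" by (simp add: hbil bilinear_lsub)
lemma hr_sub[simp]: "q \<in> U \<Longrightarrow> h q z (x - y) = h q z x - h q z y" by (simp add: hbil bilinear_rsub)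
lemma hl_neg[simp]: "q \<in> U \<Longrightarrow> h q (- x) z = - h q x z" by (simp add: hbil bilinear_lneg)
lemma hr_neg[simp]: "q \<in> U \<Longrightarrow> h q z (- x) = - h q z x" by (simp add: hbil bilinear_rneg)
lemma hl_mul[simp]: "q \<in> U \<Longrightarrow> h q (c *\<^sub>R x) z = c * h q x z" by (simp add: hbil bilinear_lmul)
lemma hr_mul[simp]: "q \<in> U \<Longrightarrow> h q z (c *\<^sub>R x) = c * h q z x" by (simp add: hbil bilinear_rmul)
lemma hl_0[simp]: "q \<in> U \<Longrightarrow> h q 0 z = 0" by (simp add: hbil bilinear_lzero)
lemma hr_0[simp]: "q \<in> U \<Longrightarrow> h q z 0 = 0" by (simp add: hbil bilinear_rzero)

lemma J_add[simp]: "q \<in> U \<Longrightarrow> J q (x + y) = J q x + J q y" using Jlin linear_add by blast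
lemma J_sub[simp]: "q \<in> U \<Longrightarrow> J q (x - y) = J q x - J q y" using Jlin linear_diff by blast
lemma J_neg[simp]: "q \<in> U \<Longrightarrow> J q (- x) = - J q x" using Jlin linear_neg by blast
lemma J_mul[simp]: "q \<in> U \<Longrightarrow> J q (c *\<^sub>R x) = c *\<^sub>R J q x" using Jlin linear_scale by blast
lemma J_0[simp]: "q \<in> U \<Longrightarrow> J q 0 = 0" using Jlin linear_0 by blast

lemma hJ_swap: "q \<in> U \<Longrightarrow> h q (J q x) y = h q x (J q y)"
proof -
  assume q: "q \<in> U"
  have "h q (J q x) y = - h q (J q x) (J q (J q y))" using q by simp
  also have "\<dots> = h q x (J q y)" using q hJJ[of q x "J q y"] by simp
  finally show ?thesis .
qed

lemma sumB: "sum f Basis = f e1 + f e2"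
proof -
  have "sum f Basis = sum f {e1, e2}" by (simp only: B2)
  then show ?thesis using ne by simp
qed

lemma vec2: "x = (x \<bullet> e1) *\<^sub>R e1 + (x \<bullet> e2) *\<^sub>R e2"
  using euclidean_representation[of x] by (simp add: sumB)

lemma lin_eq2:
  assumes "linear f" "linear g" "f e1 = g e1" "f e2 = g e2"
  shows "f x = g x"
proof -
  have "f x = f ((x \<bullet> e1) *\<^sub>R e1 + (x \<bullet> e2) *\<^sub>R e2)" using vec2 by metis
  also have "\<dots> = (x \<bullet> e1) *\<^sub>R f e1 + (x \<bullet> e2) *\<^sub>R f e2" using assms(1) by (simp add: linear_add linear_scale)
  also have "\<dots> = g ((x \<bullet> e1) *\<^sub>R e1 + (x \<bullet> e2) *\<^sub>R e2)" using assms by (simp add: linear_add linear_scale)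
  finally show ?thesis using vec2 by metis
qed

lemma Ck2: "Ck 2 U f \<Longrightarrow> f differentiable_on U \<and> (\<forall>e\<in>Basis. (\<lambda>p. frechet_derivative f (at p) e) differentiable_on U)"
  by (simp add: numeral_2_eq_2)

lemma sm_diff: "smooth_fun_on U f \<Longrightarrow> q \<in> U \<Longrightarrow> f differentiable (at q)"
  using Ck2 openU differentiable_on_eq_differentiable_at unfolding smooth_fun_on_def by blast

lemma sm_diff2: "smooth_fun_on U f \<Longrightarrow> q \<in> U \<Longrightarrow> (\<lambda>p. frechet_derivative f (at p) v) differentiable (at q)"
proof -
  assume sm: "smooth_fun_on U f" and q: "q \<in> U"
  have d: "(\<lambda>p. frechet_derivative f (at p) e) differentiable (at q)" if "e \<in> Basis" for e
    using Ck2[of f] sm that q openU differentiable_on_eq_differentiable_at unfolding smooth_fun_on_def by blast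
  have "(\<lambda>p. (v \<bullet> e1) * frechet_derivative f (at p) e1 + (v \<bullet> e2) * frechet_derivative f (at p) e2) differentiable (at q)"
    using d[of e1] d[of e2] B2 by (intro differentiable_add differentiable_mult differentiable_const) auto
  moreover have "(v \<bullet> e1) * frechet_derivative f (at p) e1 + (v \<bullet> e2) * frechet_derivative f (at p) e2
      = frechet_derivative f (at p) v" if "p \<in> U" for p
  proof -
    have "linear (frechet_derivative f (at p))" using sm_diff[OF sm that] linear_frechet_derivative by blast
    then have fa: "frechet_derivative f (at p) ((v \<bullet> e1) *\<^sub>R e1 + (v \<bullet> e2) *\<^sub>R e2)
      = (v \<bullet> e1) * frechet_derivative f (at p) e1 + (v \<bullet> e2) * frechet_derivative f (at p) e2"
      by (simp add: linear_add linear_scale)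
    have eq: "(v \<bullet> e1) *\<^sub>R e1 + (v \<bullet> e2) *\<^sub>R e2 = v" by (rule vec2[symmetric])
    show ?thesis using fa unfolding eq by (rule sym)
  qed
  ultimately show ?thesis by (rule diff_transform_open[OF _ openU q])
qed

lemma h_diff: "q \<in> U \<Longrightarrow> (\<lambda>q. h q x y) differentiable (at q)" using sm_diff hsm by blast
lemma Dh_diff: "q \<in> U \<Longrightarrow> (\<lambda>q. Dh h x y q v) differentiable (at q)"
  unfolding Dh_def using sm_diff2 hsm by blast
lemma Dh_lin: "q \<in> U \<Longrightarrow> linear (Dh h x y q)"
  unfolding Dh_def using h_diff linear_frechet_derivative by (metis eta_contract_eq)

lemma Jc_diff: "q \<in> U \<Longrightarrow> (\<lambda>q. J q z \<bullet> e) differentiable (at q)" using sm_diff Jsm by blast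
lemma J_diff: "q \<in> U \<Longrightarrow> (\<lambda>q. J q z) differentiable (at q)"
proof -
  assume q: "q \<in> U"
  have "(\<lambda>q. (J q z \<bullet> e1) *\<^sub>R e1 + (J q z \<bullet> e2) *\<^sub>R e2) differentiable (at q)"
    using Jc_diff[OF q, of z e1] Jc_diff[OF q, of z e2]
    by (intro differentiable_add differentiable_scaleR differentiable_const)
  moreover have "(\<lambda>q. (J q z \<bullet> e1) *\<^sub>R e1 + (J q z \<bullet> e2) *\<^sub>R e2) = (\<lambda>q. J q z)"
    by (rule ext) (rule vec2[symmetric])
  ultimately show ?thesis by simp
qed

lemma h_exp: "q \<in> U \<Longrightarrow> h q x y = (x \<bullet> e1) * (y \<bullet> e1) * h q e1 e1 + (x \<bullet> e1) * (y \<bullet> e2) * h q e1 e2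
   + (x \<bullet> e2) * (y \<bullet> e1) * h q e2 e1 + (x \<bullet> e2) * (y \<bullet> e2) * h q e2 e2"
proof -
  assume q: "q \<in> U"
  have "h q ((a *\<^sub>R e1) + (b *\<^sub>R e2)) ((c *\<^sub>R e1) + (d *\<^sub>R e2)) =
     a * c * h q e1 e1 + a * d * h q e1 e2 + b * c * h q e2 e1 + b * d * h q e2 e2" for a b c d
    using q by (simp add: algebra_simps)
  from this[of "x \<bullet> e1" "x \<bullet> e2" "y \<bullet> e1" "y \<bullet> e2"] show ?thesis
    by (simp only: vec2[symmetric])
qed

lemma hd_works: "q \<in> U \<Longrightarrow> ((\<lambda>q. h q x y) has_derivative Dh h x y q) (at q)"
  unfolding Dh_def using h_diff frechet_derivative_works by (metis eta_contract_eq)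

lemma Dh_exp: "q \<in> U \<Longrightarrow> Dh h x y q v = (x \<bullet> e1) * (y \<bullet> e1) * Dh h e1 e1 q v + (x \<bullet> e1) * (y \<bullet> e2) * Dh h e1 e2 q v
   + (x \<bullet> e2) * (y \<bullet> e1) * Dh h e2 e1 q v + (x \<bullet> e2) * (y \<bullet> e2) * Dh h e2 e2 q v"
proof -
  assume q: "q \<in> U"
  let ?F = "\<lambda>q. (x \<bullet> e1) * (y \<bullet> e1) * h q e1 e1 + (x \<bullet> e1) * (y \<bullet> e2) * h q e1 e2
   + (x \<bullet> e2) * (y \<bullet> e1) * h q e2 e1 + (x \<bullet> e2) * (y \<bullet> e2) * h q e2 e2"
  let ?F' = "\<lambda>v. (x \<bullet> e1) * (y \<bullet> e1) * Dh h e1 e1 q v + (x \<bullet> e1) * (y \<bullet> e2) * Dh h e1 e2 q v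
   + (x \<bullet> e2) * (y \<bullet> e1) * Dh h e2 e1 q v + (x \<bullet> e2) * (y \<bullet> e2) * Dh h e2 e2 q v"
  have "(?F has_derivative ?F') (at q)"
    by (intro has_derivative_add has_derivative_mult_right hd_works[OF q])
  then have "((\<lambda>q. h q x y) has_derivative ?F') (at q)"
    by (rule has_derivative_transform_within_open[OF _ openU q]) (simp add: h_exp[of _ x y])
  then have "?F' = Dh h x y q" unfolding Dh_def by (rule frechet_derivative_at)
  from fun_cong[OF this, of v] show ?thesis by simp
qed

lemma Dh_sym: "q \<in> U \<Longrightarrow> Dh h x y q v = Dh h y x q v"
  unfolding Dh_def using fd_cong_open[OF openU, of q "\<lambda>q. h q x y" "\<lambda>q. h q y x"] hsym by metis

lemma Dh_l0[simp]: "q \<in> U \<Longrightarrow> Dh h 0 y q v = 0" by (simp add: Dh_exp[of q 0 y v])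
lemma Dh_r0[simp]: "q \<in> U \<Longrightarrow> Dh h x 0 q v = 0" by (simp add: Dh_exp[of q x 0 v])
lemma Dh_v0[simp]: "q \<in> U \<Longrightarrow> Dh h x y q 0 = 0" using Dh_lin linear_0 by blast
lemma Dh_ladd: "q \<in> U \<Longrightarrow> Dh h (x + x') y q v = Dh h x y q v + Dh h x' y q v"
  by (simp add: Dh_exp[of q "x + x'" y v] Dh_exp[of q x y v] Dh_exp[of q x' y v] inner_add_left algebra_simps)
lemma Dh_radd: "q \<in> U \<Longrightarrow> Dh h x (y + y') q v = Dh h x y q v + Dh h x y' q v"
  by (simp add: Dh_exp[of q x "y + y'" v] Dh_exp[of q x y v] Dh_exp[of q x y' v] inner_add_left algebra_simps)
lemma Dh_lmul: "q \<in> U \<Longrightarrow> Dh h (c *\<^sub>R x) y q v = c * Dh h x y q v"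
  by (simp add: Dh_exp[of q "c *\<^sub>R x" y v] Dh_exp[of q x y v] algebra_simps)
lemma Dh_rmul: "q \<in> U \<Longrightarrow> Dh h x (c *\<^sub>R y) q v = c * Dh h x y q v"
  by (simp add: Dh_exp[of q x "c *\<^sub>R y" v] Dh_exp[of q x y v] algebra_simps)
lemma Dh_vadd: "q \<in> U \<Longrightarrow> Dh h x y q (v + w) = Dh h x y q v + Dh h x y q w"
  using Dh_lin[of q] by (simp add: linear_add)
lemma Dh_vmul: "q \<in> U \<Longrightarrow> Dh h x y q (c *\<^sub>R v) = c * Dh h x y q v"
  using Dh_lin[of q] by (simp add: linear_scale)

lemma Dh_rlin: "q \<in> U \<Longrightarrow> linear (\<lambda>w. Dh h x w q v)"
  by (rule linearI) (simp_all add: Dh_radd Dh_rmul)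
lemma Dh_llin: "q \<in> U \<Longrightarrow> linear (\<lambda>w. Dh h w y q v)"
  by (rule linearI) (simp_all add: Dh_ladd Dh_lmul)

lemma Kz_lin: "q \<in> U \<Longrightarrow> linear (Kz h q x y)"
  unfolding Kz_def
  by (rule linearI) (simp_all add: Dh_radd Dh_rmul Dh_vadd Dh_vmul field_simps)

end



context S1ctx begin
lemma eB: "e1 \<in> Basis" "e2 \<in> Basis" by (simp_all add: B2)
lemma e_inner[simp]: "e1 \<bullet> e1 = 1" "e2 \<bullet> e2 = 1" "e1 \<bullet> e2 = 0" "e2 \<bullet> e1 = 0"
  using inner_Basis[OF eB(1) eB(1)] inner_Basis[OF eB(2) eB(2)] inner_Basis[OF eB(1) eB(2)]
    inner_Basis[OF eB(2) eB(1)] ne by auto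
lemma e_nz[simp]: "e1 \<noteq> 0" "e2 \<noteq> 0"
  by (metis e_inner(1) inner_zero_left zero_neq_one) (metis e_inner(2) inner_zero_left zero_neq_one)

definition det2 :: "('a \<Rightarrow> 'a \<Rightarrow> real) \<Rightarrow> real" where
  "det2 B = B e1 e1 * B e2 e2 - B e1 e2 * B e1 e2"
definition riesz :: "('a \<Rightarrow> 'a \<Rightarrow> real) \<Rightarrow> ('a \<Rightarrow> real) \<Rightarrow> 'a" where
  "riesz B f = ((B e2 e2 * f e1 - B e1 e2 * f e2) / det2 B) *\<^sub>R e1
             + ((B e1 e1 * f e2 - B e1 e2 * f e1) / det2 B) *\<^sub>R e2"

lemma bil_exp: "bilinear B \<Longrightarrow> B x y = (x \<bullet> e1) * (y \<bullet> e1) * B e1 e1 + (x \<bullet> e1) * (y \<bullet> e2) * B e1 e2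
   + (x \<bullet> e2) * (y \<bullet> e1) * B e2 e1 + (x \<bullet> e2) * (y \<bullet> e2) * B e2 e2"
proof -
  assume b: "bilinear B"
  have "B ((a *\<^sub>R e1) + (b *\<^sub>R e2)) ((c *\<^sub>R e1) + (d *\<^sub>R e2)) =
     a * c * B e1 e1 + a * d * B e1 e2 + b * c * B e2 e1 + b * d * B e2 e2" for a b c d
    using b by (simp add: bilinear_ladd bilinear_radd bilinear_lmul bilinear_rmul algebra_simps)
  from this[of "x \<bullet> e1" "x \<bullet> e2" "y \<bullet> e1" "y \<bullet> e2"] show ?thesis
    by (simp only: vec2[symmetric])
qed

lemma det2_nz:
  assumes b: "bilinear B" and sy: "\<And>x y. B x y = B y x" and nd: "\<And>x. (\<And>y. B x y = 0) \<Longrightarrow> x = 0"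
  shows "det2 B \<noteq> 0"
proof
  assume d: "det2 B = 0"
  let ?v = "B e2 e2 *\<^sub>R e1 - B e1 e2 *\<^sub>R e2"
  have "B ?v y = 0" for y
    using d sy[of e2 e1] unfolding det2_def
    by (simp add: bil_exp[OF b, of ?v y] algebra_simps inner_diff_left)
  then have "?v = 0" by (rule nd)
  then have "?v \<bullet> e1 = 0" "?v \<bullet> e2 = 0" by simp_all
  then have z: "B e2 e2 = 0" "B e1 e2 = 0" by (simp_all add: inner_diff_left)
  have "B e2 y = 0" for y using z sy[of e2 e1] by (simp add: bil_exp[OF b, of e2 y])
  then have "e2 = 0" by (rule nd)
  then show False by simp
qed

lemma riesz_works:
  assumes b: "bilinear B" and sy: "\<And>x y. B x y = B y x" and dn: "det2 B \<noteq> 0" and lf: "linear f"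
  shows "B (riesz B f) w = f w"
proof (rule lin_eq2[of "B (riesz B f)" f])
  show "linear (B (riesz B f))" using b unfolding bilinear_def by blast
  show "linear f" by fact
  let ?d = "det2 B"
  have r1: "riesz B f \<bullet> e1 = (B e2 e2 * f e1 - B e1 e2 * f e2) / ?d"
    and r2: "riesz B f \<bullet> e2 = (B e1 e1 * f e2 - B e1 e2 * f e1) / ?d"
    unfolding riesz_def by (simp_all add: inner_add_left)
  have "B (riesz B f) e1 = (riesz B f \<bullet> e1) * B e1 e1 + (riesz B f \<bullet> e2) * B e2 e1"
    by (simp add: bil_exp[OF b, of "riesz B f" e1])
  also have "\<dots> = ((B e2 e2 * f e1 - B e1 e2 * f e2) * B e1 e1 + (B e1 e1 * f e2 - B e1 e2 * f e1) * B e1 e2) / ?d"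
    unfolding r1 r2 sy[of e2 e1] by (simp add: add_divide_distrib)
  also have "\<dots> = f e1 * ?d / ?d" unfolding det2_def by (simp add: algebra_simps)
  finally show "B (riesz B f) e1 = f e1" using dn by simp
  have "B (riesz B f) e2 = (riesz B f \<bullet> e1) * B e1 e2 + (riesz B f \<bullet> e2) * B e2 e2"
    by (simp add: bil_exp[OF b, of "riesz B f" e2])
  also have "\<dots> = ((B e2 e2 * f e1 - B e1 e2 * f e2) * B e1 e2 + (B e1 e1 * f e2 - B e1 e2 * f e1) * B e2 e2) / ?d"
    unfolding r1 r2 by (simp add: add_divide_distrib)
  also have "\<dots> = f e2 * ?d / ?d" unfolding det2_def by (simp add: algebra_simps)
  finally show "B (riesz B f) e2 = f e2" using dn by simp
qed

lemma riesz_unique: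
  assumes b: "bilinear B" and sy: "\<And>x y. B x y = B y x" and nd: "\<And>x. (\<And>y. B x y = 0) \<Longrightarrow> x = 0"
    and lf: "linear f" and v: "\<And>w. B v w = f w"
  shows "v = riesz B f"
proof -
  have dn: "det2 B \<noteq> 0" by (rule det2_nz[OF b sy nd])
  have "B (v - riesz B f) w = 0" for w
    using v[of w] riesz_works[OF b sy dn lf, of w] b by (simp add: bilinear_lsub)
  then have "v - riesz B f = 0" by (rule nd)
  then show ?thesis by simp
qed

lemma hdet_nz: assumes q: "q \<in> U" shows "det2 (h q) \<noteq> 0"
  by (rule det2_nz[OF hbil[OF q] hsym[OF q] hnd[OF q]])

lemma christ_h: assumes q: "q \<in> U" shows "christ h q x y = riesz (h q) (Kz h q x y)"
  unfolding christ_def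
proof (rule the_equality)
  show "\<forall>z. h q (riesz (h q) (Kz h q x y)) z =
       (frechet_derivative (\<lambda>q. h q y z) (at q) x + frechet_derivative (\<lambda>q. h q x z) (at q) y -
        frechet_derivative (\<lambda>q. h q x y) (at q) z) / 2"
    using riesz_works[OF hbil[OF q] hsym[OF q] hdet_nz[OF q] Kz_lin[OF q]]
    unfolding Kz_def Dh_def by simp
  fix v assume "\<forall>z. h q v z =
       (frechet_derivative (\<lambda>q. h q y z) (at q) x + frechet_derivative (\<lambda>q. h q x z) (at q) y -
        frechet_derivative (\<lambda>q. h q x y) (at q) z) / 2"
  then have "h q v w = Kz h q x y w" for w unfolding Kz_def Dh_def by simp
  thm riesz_unique[OF hbil[OF q] hsym[OF q] hnd[OF q] Kz_lin[OF q], of v]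
  then show "v = riesz (h q) (Kz h q x y)"
    by (intro riesz_unique[OF hbil[OF q] hsym[OF q]] hnd[OF q] Kz_lin[OF q])
qed

lemma Gm_koszul: assumes q: "q \<in> U" shows "h q (christ h q x y) w = Kz h q x y w"
  using riesz_works[OF hbil[OF q] hsym[OF q] hdet_nz[OF q] Kz_lin[OF q]] christ_h[OF q] by simp

lemma Gm_eqI: assumes q: "q \<in> U" and v: "\<And>w. h q v w = Kz h q x y w" shows "christ h q x y = v"
proof -
  have "v = riesz (h q) (Kz h q x y)"
    using v by (intro riesz_unique[OF hbil[OF q] hsym[OF q]] hnd[OF q] Kz_lin[OF q])
  then show ?thesis using christ_h[OF q] by simp
qed

lemma Gm_sym: assumes q: "q \<in> U" shows "christ h q x y = christ h q y x"
  by (rule Gm_eqI[OF q]) (simp add: Gm_koszul[OF q] Kz_def Dh_sym[OF q, of x y])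

lemma Gm_l0[simp]: assumes q: "q \<in> U" shows "christ h q 0 y = 0"
  by (rule Gm_eqI[OF q]) (simp add: Kz_def q)
lemma Gm_r0[simp]: assumes q: "q \<in> U" shows "christ h q x 0 = 0"
  by (rule Gm_eqI[OF q]) (simp add: Kz_def q)

lemma metric_compat: assumes q: "q \<in> U"
  shows "Dh h y z q x = h q (christ h q x y) z + h q y (christ h q x z)"
proof -
  have "h q y (christ h q x z) = h q (christ h q x z) y" using hsym[OF q] by simp
  then show ?thesis
    by (simp add: Gm_koszul[OF q] Kz_def Dh_sym[OF q, of z y] Dh_sym[OF q, of x z] Dh_sym[OF q, of x y] field_simps)
qed

end


context S1ctx begin

lemma Gm_diff: assumes q: "q \<in> U" shows "(\<lambda>q. christ h q y z) differentiable (at q)"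
proof -
  have hd: "\<And>a b. (\<lambda>q. h q a b) differentiable (at q)" using h_diff[OF q] .
  have dd: "\<And>a b v. (\<lambda>q. Dh h a b q v) differentiable (at q)" using Dh_diff[OF q] .
  have "(\<lambda>q. riesz (h q) (Kz h q y z)) differentiable (at q)"
    unfolding riesz_def Kz_def det2_def
    by (intro differentiable_add differentiable_scaleR differentiable_divide differentiable_mult
        differentiable_diff differentiable_const hd dd) (insert hdet_nz[OF q, unfolded det2_def], simp_all)
  then show ?thesis
    by (rule diff_transform_open[OF _ openU q]) (simp add: christ_h)
qed

lemma kaehler: assumes q: "q \<in> U" shows "DJ J z q x = J q (christ h q x z) - christ h q x (J q z)"
proof -
  have "lc_cov h (\<lambda>_. x) (\<lambda>q. J q z) q - J q (lc_cov h (\<lambda>_. x) (\<lambda>_. z) q) = 0"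
    using KN q unfolding kaehler_norden_def by blast
  then show ?thesis unfolding lc_cov_def DJ_def by (simp add: algebra_simps)
qed

lemma J_works: assumes q: "q \<in> U" shows "((\<lambda>q. J q z) has_derivative DJ J z q) (at q)"
  unfolding DJ_def using J_diff[OF q] frechet_derivative_works by (metis eta_contract_eq)

lemma DJ_lin: assumes q: "q \<in> U" shows "linear (DJ J z q)"
  unfolding DJ_def using J_diff[OF q] linear_frechet_derivative by (metis eta_contract_eq)

lemma prod_rule: assumes q: "q \<in> U"
  shows "DhJ h J y z q v = Dh h y (J q z) q v + h q y (DJ J z q v)"
proof -
  let ?F = "\<lambda>q. (J q z \<bullet> e1) * h q y e1 + (J q z \<bullet> e2) * h q y e2"
  let ?F' = "\<lambda>v. ((J q z \<bullet> e1) * Dh h y e1 q v + (DJ J z q v \<bullet> e1) * h q y e1)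
       + ((J q z \<bullet> e2) * Dh h y e2 q v + (DJ J z q v \<bullet> e2) * h q y e2)"
  have "(?F has_derivative ?F') (at q)"
    by (intro has_derivative_add has_derivative_mult has_derivative_inner_left J_works[OF q] hd_works[OF q])
  then have "((\<lambda>q. h q y (J q z)) has_derivative ?F') (at q)"
  proof (rule has_derivative_transform_within_open[OF _ openU q])
    fix p assume p: "p \<in> U"
    have "h p y (J p z) = h p y ((J p z \<bullet> e1) *\<^sub>R e1 + (J p z \<bullet> e2) *\<^sub>R e2)"
      by (simp only: vec2[symmetric])
    then show "?F p = h p y (J p z)" using p by simp
  qed
  then have "?F' = DhJ h J y z q" unfolding DhJ_def by (rule frechet_derivative_at)
  from fun_cong[OF this, of v] have "DhJ h J y z q v = ?F' v" by simp
  also have "\<dots> = Dh h y ((J q z \<bullet> e1) *\<^sub>R e1 + (J q z \<bullet> e2) *\<^sub>R e2) q v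
      + h q y ((DJ J z q v \<bullet> e1) *\<^sub>R e1 + (DJ J z q v \<bullet> e2) *\<^sub>R e2)"
    using q by (simp add: Dh_radd Dh_rmul algebra_simps)
  also have "\<dots> = Dh h y (J q z) q v + h q y (DJ J z q v)"
    by (simp only: vec2[symmetric])
  finally show ?thesis .
qed

lemma DhJ_eq: assumes q: "q \<in> U"
  shows "DhJ h J y z q x = h q (christ h q x y) (J q z) + h q y (J q (christ h q x z))"
  using q by (simp add: prod_rule metric_compat kaehler)

end


definition GC :: "('a::euclidean_space \<Rightarrow> 'a \<Rightarrow> 'a \<Rightarrow> real) \<Rightarrow> ('a \<Rightarrow> 'a \<Rightarrow> 'a) \<Rightarrow> real \<times> 'a \<Rightarrow> real \<times> 'a \<Rightarrow> real \<times> 'a \<Rightarrow> real \<times> 'a" where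
  "GC h J Q X Y = (sin (2 * fst Q) * h (snd Q) (snd X) (snd Y) + cos (2 * fst Q) * h (snd Q) (snd X) (J (snd Q) (snd Y)),
     christ h (snd Q) (snd X) (snd Y) - fst X *\<^sub>R J (snd Q) (snd Y) - fst Y *\<^sub>R J (snd Q) (snd X))"

context S1ctx begin

abbreviation "g \<equiv> s1_metric h J"

lemma snd_works: "((\<lambda>Q::real \<times> 'a. snd Q) has_derivative (\<lambda>V. snd V)) (at Q)"
  using has_derivative_snd[OF has_derivative_ident] .
lemma fst_works: "((\<lambda>Q::real \<times> 'a. fst Q) has_derivative (\<lambda>V. fst V)) (at Q)"
  using has_derivative_fst[OF has_derivative_ident] .

lemma sin_works: "((\<lambda>Q::real \<times> 'a. sin (2 * fst Q)) has_derivative (\<lambda>V. 2 * fst V * cos (2 * fst Q))) (at Q)"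
  by (rule has_derivative_eq_rhs[OF has_derivative_sin[OF has_derivative_mult_right[OF fst_works]]]) simp
lemma cos_works: "((\<lambda>Q::real \<times> 'a. cos (2 * fst Q)) has_derivative (\<lambda>V. - (2 * fst V * sin (2 * fst Q)))) (at Q)"
  by (rule has_derivative_eq_rhs[OF has_derivative_cos[OF has_derivative_mult_right[OF fst_works]]]) (simp add: fun_eq_iff)

lemma comp_snd:
  fixes f :: "'a \<Rightarrow> 'c::real_normed_vector" and Q :: "real \<times> 'a"
  shows "(f has_derivative f') (at (snd Q)) \<Longrightarrow> ((\<lambda>Q. f (snd Q)) has_derivative (\<lambda>V. f' (snd V))) (at Q)"
  using has_derivative_compose[OF snd_works, of f f' Q] by simp

lemma hJ_works: "q \<in> U \<Longrightarrow> ((\<lambda>q. h q y (J q z)) has_derivative DhJ h J y z q) (at q)"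
proof -
  assume q: "q \<in> U"
  have "(\<lambda>q. h q y (J q z)) differentiable (at q)"
  proof (rule diff_transform_open[OF _ openU q])
    show "(\<lambda>q. (J q z \<bullet> e1) * h q y e1 + (J q z \<bullet> e2) * h q y e2) differentiable (at q)"
      by (intro differentiable_add differentiable_mult Jc_diff[OF q] h_diff[OF q])
    fix p assume p: "p \<in> U"
    have "h p y (J p z) = h p y ((J p z \<bullet> e1) *\<^sub>R e1 + (J p z \<bullet> e2) *\<^sub>R e2)"
      by (simp only: vec2[symmetric])
    then show "(J p z \<bullet> e1) * h p y e1 + (J p z \<bullet> e2) * h p y e2 = h p y (J p z)" using p by simp
  qed
  then show ?thesis unfolding DhJ_def using frechet_derivative_works by (metis eta_contract_eq)
qed

lemma g_works:
  assumes q: "q \<in> U"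
  shows "((\<lambda>Q. g Q Y W) has_derivative (\<lambda>V. fst V * (- 2 * sin (2 * T) * h q (snd Y) (snd W) - 2 * cos (2 * T) * h q (snd Y) (J q (snd W)))
     + cos (2 * T) * Dh h (snd Y) (snd W) q (snd V) - sin (2 * T) * DhJ h J (snd Y) (snd W) q (snd V))) (at (T, q))"
proof -
  have a: "((\<lambda>Q. h (snd Q) (snd Y) (snd W)) has_derivative (\<lambda>V. Dh h (snd Y) (snd W) q (snd V))) (at (T, q))"
    using comp_snd[of "\<lambda>q. h q (snd Y) (snd W)" "Dh h (snd Y) (snd W) q" "(T, q)"] hd_works[OF q] by simp
  have b: "((\<lambda>Q. h (snd Q) (snd Y) (J (snd Q) (snd W))) has_derivative (\<lambda>V. DhJ h J (snd Y) (snd W) q (snd V))) (at (T, q))"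
    using comp_snd[of "\<lambda>q. h q (snd Y) (J q (snd W))" "DhJ h J (snd Y) (snd W) q" "(T, q)"] hJ_works[OF q] by simp
  have c: "((\<lambda>Q. fst Y * fst W + cos (2 * fst Q) * h (snd Q) (snd Y) (snd W) -
           sin (2 * fst Q) * h (snd Q) (snd Y) (J (snd Q) (snd W))) has_derivative
      (\<lambda>V. 0 + (cos (2 * fst (T, q)) * Dh h (snd Y) (snd W) q (snd V) + - (2 * fst V * sin (2 * fst (T, q))) * h (snd (T, q)) (snd Y) (snd W))
       - (sin (2 * fst (T, q)) * DhJ h J (snd Y) (snd W) q (snd V) + 2 * fst V * cos (2 * fst (T, q)) * h (snd (T, q)) (snd Y) (J (snd (T, q)) (snd W))))) (at (T, q))"
    by (intro has_derivative_add has_derivative_diff has_derivative_mult has_derivative_const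
      sin_works cos_works a b)
  show ?thesis unfolding s1_metric_def
    by (rule has_derivative_eq_rhs[OF c]) (simp add: fun_eq_iff algebra_simps)
qed

lemma g_fd:
  assumes q: "q \<in> U"
  shows "frechet_derivative (\<lambda>Q. g Q Y W) (at (T, q)) X =
     fst X * (- 2 * sin (2 * T) * h q (snd Y) (snd W) - 2 * cos (2 * T) * h q (snd Y) (J q (snd W)))
     + cos (2 * T) * Dh h (snd Y) (snd W) q (snd X) - sin (2 * T) * DhJ h J (snd Y) (snd W) q (snd X)"
  using frechet_derivative_at[OF g_works[OF q, of Y W T]] by (metis (no_types, lifting))


lemma dgX: assumes q: "q \<in> U"
  shows "frechet_derivative (\<lambda>Q. g Q Y W) (at (T, q)) X =
     fst X * (- 2 * sin (2 * T) * h q (snd Y) (snd W) - 2 * cos (2 * T) * h q (snd Y) (J q (snd W)))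
     + cos (2 * T) * (h q (christ h q (snd X) (snd Y)) (snd W) + h q (snd Y) (christ h q (snd X) (snd W)))
     - sin (2 * T) * (h q (christ h q (snd X) (snd Y)) (J q (snd W)) + h q (snd Y) (J q (christ h q (snd X) (snd W))))"
  using g_fd[OF q] metric_compat[OF q] DhJ_eq[OF q] by simp

lemma g_lsub: "g Q (A - B) W = g Q A W - g Q B W" if "snd Q \<in> U"
  using that unfolding s1_metric_def by (simp add: algebra_simps)

lemma g_nd: assumes q: "q \<in> U" and z: "\<And>W. g (T, q) V W = 0" shows "V = 0"
proof -
  obtain s v where V: "V = (s, v)" by (cases V)
  have "s = 0" using z[of "(1, 0)"] q unfolding V s1_metric_def by simp
  moreover have "v = 0"
  proof (rule hnd[OF q])
    fix u
    let ?C = "cos (2 * T)" and ?S = "sin (2 * T)"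
    have "0 = g (T, q) V (0, ?C *\<^sub>R u + ?S *\<^sub>R J q u)" using z by simp
    also have "\<dots> = ?C * (?C * h q v u + ?S * h q v (J q u)) - ?S * (?C * h q v (J q u) - ?S * h q v u)"
      using q unfolding V s1_metric_def by simp
    also have "\<dots> = h q v u * (?C * ?C + ?S * ?S)" by algebra
    also have "\<dots> = h q v u" by (simp only: sin_cos_squared_add3 mult_1_right)
    finally show "h q v u = 0" by simp
  qed
  ultimately show ?thesis using V by (simp add: zero_prod_def)
qed

lemma christ_g: assumes q: "q \<in> U" shows "christ g (T, q) X Y = GC h J (T, q) X Y"
  unfolding christ_def
proof (rule the_equality)
  obtain s1 x where X: "X = (s1, x)" by (cases X)
  obtain s2 y where Y: "Y = (s2, y)" by (cases Y)
  show hg: "\<forall>Z. g (T, q) (GC h J (T, q) X Y) Z =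
       (frechet_derivative (\<lambda>Q. g Q Y Z) (at (T, q)) X + frechet_derivative (\<lambda>Q. g Q X Z) (at (T, q)) Y -
        frechet_derivative (\<lambda>Q. g Q X Y) (at (T, q)) Z) / 2"
  proof
    fix Z :: "real \<times> 'a"
    obtain s3 z where Z: "Z = (s3, z)" by (cases Z)
    have e1: "christ h q y x = christ h q x y" "christ h q z x = christ h q x z" "christ h q z y = christ h q y z"
      using Gm_sym[OF q] by auto
    have e2: "h q y (christ h q x z) = h q (christ h q x z) y"
      "h q y (J q (christ h q x z)) = h q (christ h q x z) (J q y)"
      using q hsym[OF q] hJ_swap[OF q] by metis+
    note hJ_swap[OF q, simp]
    show "g (T, q) (GC h J (T, q) X Y) Z =
       (frechet_derivative (\<lambda>Q. g Q Y Z) (at (T, q)) X + frechet_derivative (\<lambda>Q. g Q X Z) (at (T, q)) Y -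
        frechet_derivative (\<lambda>Q. g Q X Y) (at (T, q)) Z) / 2"
      unfolding dgX[OF q] unfolding X Y Z GC_def s1_metric_def
      using q by (simp add: e1 e2 algebra_simps)
  qed
  fix V assume hv: "\<forall>Z. g (T, q) V Z =
       (frechet_derivative (\<lambda>Q. g Q Y Z) (at (T, q)) X + frechet_derivative (\<lambda>Q. g Q X Z) (at (T, q)) Y -
        frechet_derivative (\<lambda>Q. g Q X Y) (at (T, q)) Z) / 2"
  have "g (T, q) (V - GC h J (T, q) X Y) Z = 0" for Z
    using spec[OF hv, of Z] spec[OF hg, of Z] g_lsub[of "(T, q)"] q by simp
  then have "V - GC h J (T, q) X Y = 0" by (rule g_nd[OF q])
  then show "V = GC h J (T, q) X Y" by simp
qed

end


lemma curv_op_const: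
  "curv_op G (\<lambda>_. X) (\<lambda>_. Y) (\<lambda>_. Z) P =
     frechet_derivative (\<lambda>Q. christ G Q Y Z) (at P) X + christ G P X (christ G P Y Z)
     - (frechet_derivative (\<lambda>Q. christ G Q X Z) (at P) Y + christ G P Y (christ G P X Z))
     - christ G P 0 Z"
  unfolding curv_op_def lc_cov_def lie_def by simp

context S1ctx begin

lemma Gm_works: assumes p: "p \<in> U" shows "((\<lambda>q. christ h q y z) has_derivative DGm h y z p) (at p)"
  unfolding DGm_def using Gm_diff[OF p] frechet_derivative_works by (metis eta_contract_eq)

lemma GC_works:
  assumes p: "p \<in> U"
  shows "((\<lambda>Q. christ g Q Y Z) has_derivative
     (\<lambda>V. (fst V * (2 * cos (2 * T) * h p (snd Y) (snd Z) - 2 * sin (2 * T) * h p (snd Y) (J p (snd Z)))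
            + sin (2 * T) * Dh h (snd Y) (snd Z) p (snd V) + cos (2 * T) * DhJ h J (snd Y) (snd Z) p (snd V),
           DGm h (snd Y) (snd Z) p (snd V) - fst Y *\<^sub>R DJ J (snd Z) p (snd V) - fst Z *\<^sub>R DJ J (snd Y) p (snd V))))
     (at (T, p))"
proof -
  have a: "((\<lambda>Q. h (snd Q) (snd Y) (snd Z)) has_derivative (\<lambda>V. Dh h (snd Y) (snd Z) p (snd V))) (at (T, p))"
    using comp_snd[of "\<lambda>q. h q (snd Y) (snd Z)" "Dh h (snd Y) (snd Z) p" "(T, p)"] hd_works[OF p] by simp
  have b: "((\<lambda>Q. h (snd Q) (snd Y) (J (snd Q) (snd Z))) has_derivative (\<lambda>V. DhJ h J (snd Y) (snd Z) p (snd V))) (at (T, p))"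
    using comp_snd[of "\<lambda>q. h q (snd Y) (J q (snd Z))" "DhJ h J (snd Y) (snd Z) p" "(T, p)"] hJ_works[OF p] by simp
  have c: "((\<lambda>Q. christ h (snd Q) (snd Y) (snd Z)) has_derivative (\<lambda>V. DGm h (snd Y) (snd Z) p (snd V))) (at (T, p))"
    using comp_snd[of "\<lambda>q. christ h q (snd Y) (snd Z)" "DGm h (snd Y) (snd Z) p" "(T, p)"] Gm_works[OF p] by simp
  have d: "((\<lambda>Q. J (snd Q) w) has_derivative (\<lambda>V. DJ J w p (snd V))) (at (T, p))" for w
    using comp_snd[of "\<lambda>q. J q w" "DJ J w p" "(T, p)"] J_works[OF p] by simp
  have e: "((\<lambda>Q. GC h J Q Y Z) has_derivative
     (\<lambda>V. (sin (2 * fst (T, p)) * Dh h (snd Y) (snd Z) p (snd V) + 2 * fst V * cos (2 * fst (T, p)) * h (snd (T, p)) (snd Y) (snd Z)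
       + (cos (2 * fst (T, p)) * DhJ h J (snd Y) (snd Z) p (snd V) + - (2 * fst V * sin (2 * fst (T, p))) * h (snd (T, p)) (snd Y) (J (snd (T, p)) (snd Z))),
       DGm h (snd Y) (snd Z) p (snd V) - fst Y *\<^sub>R DJ J (snd Z) p (snd V) - fst Z *\<^sub>R DJ J (snd Y) p (snd V))))
     (at (T, p))"
    unfolding GC_def
    by (intro has_derivative_Pair has_derivative_add has_derivative_diff has_derivative_mult
      has_derivative_scaleR_right sin_works cos_works a b c d)
  have f: "((\<lambda>Q. GC h J Q Y Z) has_derivative
     (\<lambda>V. (fst V * (2 * cos (2 * T) * h p (snd Y) (snd Z) - 2 * sin (2 * T) * h p (snd Y) (J p (snd Z)))
            + sin (2 * T) * Dh h (snd Y) (snd Z) p (snd V) + cos (2 * T) * DhJ h J (snd Y) (snd Z) p (snd V),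
           DGm h (snd Y) (snd Z) p (snd V) - fst Y *\<^sub>R DJ J (snd Z) p (snd V) - fst Z *\<^sub>R DJ J (snd Y) p (snd V))))
     (at (T, p))"
    by (rule has_derivative_eq_rhs[OF e]) (simp add: fun_eq_iff algebra_simps)
  have o: "open (UNIV \<times> U)" using openU by (simp add: open_Times)
  show ?thesis
  proof (rule has_derivative_transform_within_open[OF f o])
    show "(T, p) \<in> UNIV \<times> U" using p by simp
    fix Q :: "real \<times> 'a" assume "Q \<in> UNIV \<times> U"
    then show "GC h J Q Y Z = christ g Q Y Z" using christ_g[of "snd Q" "fst Q"] by (cases Q) simp
  qed
qed

lemma DGC:
  assumes p: "p \<in> U"
  shows "frechet_derivative (\<lambda>Q. christ g Q Y Z) (at (T, p)) V =
     (fst V * (2 * cos (2 * T) * h p (snd Y) (snd Z) - 2 * sin (2 * T) * h p (snd Y) (J p (snd Z)))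
            + sin (2 * T) * Dh h (snd Y) (snd Z) p (snd V) + cos (2 * T) * DhJ h J (snd Y) (snd Z) p (snd V),
           DGm h (snd Y) (snd Z) p (snd V) - fst Y *\<^sub>R DJ J (snd Z) p (snd V) - fst Z *\<^sub>R DJ J (snd Y) p (snd V))"
proof -
  note fd = frechet_derivative_at[OF GC_works[OF p, of Y Z T]]
  show ?thesis by (subst fd[symmetric]) simp
qed

lemma curv_g_op:
  assumes p: "p \<in> U"
  shows "curv_op g (\<lambda>_. X) (\<lambda>_. Y) (\<lambda>_. Z) (T, p) =
     frechet_derivative (\<lambda>Q. christ g Q Y Z) (at (T, p)) X + GC h J (T, p) X (GC h J (T, p) Y Z)
     - (frechet_derivative (\<lambda>Q. christ g Q X Z) (at (T, p)) Y + GC h J (T, p) Y (GC h J (T, p) X Z))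
     - GC h J (T, p) 0 Z"
  unfolding curv_op_const christ_g[OF p] ..

end


context S1ctx begin

lemma fd_zero_on: assumes p: "p \<in> U" and z: "\<And>q. q \<in> U \<Longrightarrow> f q = 0"
  shows "frechet_derivative f (at p) v = 0"
  using fd_cong_open[OF openU p, of f "\<lambda>_. 0"] z by simp

lemma DGm_l0[simp]: "p \<in> U \<Longrightarrow> DGm h 0 z p v = 0" unfolding DGm_def by (rule fd_zero_on) simp_all
lemma DGm_r0[simp]: "p \<in> U \<Longrightarrow> DGm h y 0 p v = 0" unfolding DGm_def by (rule fd_zero_on) simp_all
lemma DJ_0[simp]: "p \<in> U \<Longrightarrow> DJ J 0 p v = 0" unfolding DJ_def by (rule fd_zero_on) simp_all
lemma DhJ_l0[simp]: "p \<in> U \<Longrightarrow> DhJ h J 0 z p v = 0" unfolding DhJ_def by (rule fd_zero_on) simp_all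
lemma DhJ_r0[simp]: "p \<in> U \<Longrightarrow> DhJ h J y 0 p v = 0" unfolding DhJ_def by (rule fd_zero_on) simp_all
lemma DGm_v0[simp]: "p \<in> U \<Longrightarrow> DGm h y z p 0 = 0"
  unfolding DGm_def using linear_frechet_derivative[OF Gm_diff] linear_0 by blast
lemma DJ_v0[simp]: "p \<in> U \<Longrightarrow> DJ J z p 0 = 0" using DJ_lin linear_0 by blast
lemma DhJ_v0[simp]: "p \<in> U \<Longrightarrow> DhJ h J y z p 0 = 0"
  unfolding DhJ_def using linear_frechet_derivative[of "\<lambda>q. h q y (J q z)"] hJ_works
  by (metis differentiableI linear_0)

definition Acoef :: "real \<Rightarrow> 'a \<Rightarrow> 'a \<Rightarrow> 'a \<Rightarrow> real" where
  "Acoef T p u v = sin (2 * T) * h p u v + cos (2 * T) * h p u (J p v)"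

lemma curv_h_op:
  "curv_op h (\<lambda>_. x) (\<lambda>_. y) (\<lambda>_. z) p =
     DGm h y z p x + christ h p x (christ h p y z) - (DGm h x z p y + christ h p y (christ h p x z)) - christ h p 0 z"
  unfolding curv_op_const DGm_def ..

lemma curv_tan:
  assumes p: "p \<in> U"
  shows "snd (curv_op g (\<lambda>_. (0, c)) (\<lambda>_. (0, a)) (\<lambda>_. (0, b)) (T, p)) =
    curv_op h (\<lambda>_. c) (\<lambda>_. a) (\<lambda>_. b) p - Acoef T p a b *\<^sub>R J p c + Acoef T p c b *\<^sub>R J p a"
  unfolding curv_g_op[OF p] DGC[OF p] curv_h_op
  using p by (simp add: GC_def Acoef_def algebra_simps)

lemma curv_m1:
  assumes p: "p \<in> U"
  shows "fst (curv_op g (\<lambda>_. (1, 0)) (\<lambda>_. (0, a)) (\<lambda>_. (0, b)) (T, p)) =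
    cos (2 * T) * h p a b - sin (2 * T) * h p a (J p b)"
  unfolding curv_g_op[OF p] DGC[OF p]
  using p by (simp add: GC_def hJ_swap algebra_simps)

lemma curv_m2:
  assumes p: "p \<in> U"
  shows "snd (curv_op g (\<lambda>_. (0, c)) (\<lambda>_. (1, 0)) (\<lambda>_. (1, 0)) (T, p)) = c"
  unfolding curv_g_op[OF p] DGC[OF p]
  using p by (simp add: GC_def algebra_simps)

lemma curv_Z0:
  assumes p: "p \<in> U"
  shows "curv_op g (\<lambda>_. X) (\<lambda>_. Y) (\<lambda>_. (0, 0)) (T, p) = 0"
  unfolding curv_g_op[OF p] DGC[OF p]
  using p by (simp add: GC_def zero_prod_def)

lemma curv_xixi:
  assumes p: "p \<in> U"
  shows "curv_op g (\<lambda>_. (1, 0)) (\<lambda>_. (1, 0)) (\<lambda>_. (1, 0)) (T, p) = 0"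
  unfolding curv_g_op[OF p]
  using p by (simp add: GC_def zero_prod_def)

end


lemma gram_inv_eq:
  fixes G :: "'b::euclidean_space \<Rightarrow> 'b \<Rightarrow> 'b \<Rightarrow> real"
  assumes L: "\<forall>i\<in>Basis. \<forall>j\<in>Basis. (\<Sum>k\<in>Basis. M i k * G P k j) = (if i = j then 1 else 0)"
    and Z: "\<forall>i j. i \<notin> Basis \<or> j \<notin> Basis \<longrightarrow> M i j = 0"
    and R: "\<forall>i\<in>Basis. \<forall>j\<in>Basis. (\<Sum>k\<in>Basis. G P i k * M k j) = (if i = j then 1 else 0)"
  shows "gram_inv G P = M"
  unfolding gram_inv_def
proof (rule the_equality)
  show "(\<forall>i\<in>Basis. \<forall>j\<in>Basis. (\<Sum>k\<in>Basis. M i k * G P k j) = (if i = j then 1 else 0)) \<and>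
        (\<forall>i j. i \<notin> Basis \<or> j \<notin> Basis \<longrightarrow> M i j = 0)" by (rule conjI[OF L Z])
  fix N assume N: "(\<forall>i\<in>Basis. \<forall>j\<in>Basis. (\<Sum>k\<in>Basis. N i k * G P k j) = (if i = j then 1 else 0)) \<and>
        (\<forall>i j. i \<notin> Basis \<or> j \<notin> Basis \<longrightarrow> N i j = 0)"
  note N1 = conjunct1[OF N] and N2 = conjunct2[OF N]
  show "N = M"
  proof (intro ext)
    fix i j
    show "N i j = M i j"
    proof (cases "i \<in> Basis \<and> j \<in> Basis")
      case True
      then have i: "i \<in> Basis" and j: "j \<in> Basis" by auto
      have "N i j = (\<Sum>l\<in>Basis. if l = j then N i l else 0)"
        using j by (simp add: sum.delta)
      also have "\<dots> = (\<Sum>l\<in>Basis. N i l * (\<Sum>k\<in>Basis. G P l k * M k j))"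
      proof (rule sum.cong[OF refl])
        fix l :: 'b assume l: "l \<in> Basis"
        show "(if l = j then N i l else 0) = N i l * (\<Sum>k\<in>Basis. G P l k * M k j)"
          using R l j by simp
      qed
      also have "\<dots> = (\<Sum>l\<in>Basis. \<Sum>k\<in>Basis. N i l * G P l k * M k j)"
        by (simp add: sum_distrib_left mult.assoc)
      also have "\<dots> = (\<Sum>k\<in>Basis. \<Sum>l\<in>Basis. N i l * G P l k * M k j)"
        by (rule sum.swap)
      also have "\<dots> = (\<Sum>k\<in>Basis. (\<Sum>l\<in>Basis. N i l * G P l k) * M k j)"
        by (simp add: sum_distrib_right)
      also have "\<dots> = (\<Sum>k\<in>Basis. if i = k then M k j else 0)"
      proof (rule sum.cong[OF refl])
        fix k :: 'b assume k: "k \<in> Basis"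
        show "(\<Sum>l\<in>Basis. N i l * G P l k) * M k j = (if i = k then M k j else 0)"
          using N1 i k by simp
      qed
      also have "\<dots> = M i j" using i by (simp add: sum.delta')
      finally show ?thesis .
    next
      case False
      then have o: "i \<notin> Basis \<or> j \<notin> Basis" by simp
      have "N i j = 0" using N2 o by simp
      moreover have "M i j = 0" using Z o by simp
      ultimately show ?thesis by simp
    qed
  qed
qed


context S1ctx begin

definition oth :: "'a \<Rightarrow> 'a" where "oth i = (if i = e1 then e2 else e1)"
definition inv2 :: "('a \<Rightarrow> 'a \<Rightarrow> real) \<Rightarrow> 'a \<Rightarrow> 'a \<Rightarrow> real" where
  "inv2 B i j = (if i \<in> Basis \<and> j \<in> Basis then (if i = j then B (oth i) (oth i) else - B i j) / det2 B else 0)"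

lemma frac2: "a / d * x + b / d * y = (a * x + b * y) / (d::real)" by (simp add: add_divide_distrib)
lemma frac2': "x * (a / d) + y * (b / d) = (x * a + y * b) / (d::real)" by (simp add: add_divide_distrib)

lemma inv2_props:
  assumes sy: "\<And>x y. B x y = B y x" and dn: "det2 B \<noteq> 0"
  shows "\<forall>i\<in>Basis. \<forall>j\<in>Basis. (\<Sum>k\<in>Basis. inv2 B i k * B k j) = (if i = j then 1 else 0)"
    and "\<forall>i\<in>Basis. \<forall>j\<in>Basis. (\<Sum>k\<in>Basis. B i k * inv2 B k j) = (if i = j then 1 else 0)"
    and "\<And>i j. inv2 B i j = inv2 B j i"
    and "\<And>i j. i \<notin> Basis \<or> j \<notin> Basis \<Longrightarrow> inv2 B i j = 0"
proof -
  have b: "\<And>i. i \<in> Basis \<longleftrightarrow> i = e1 \<or> i = e2" using B2 by auto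
  have s: "B e2 e1 = B e1 e2" by (rule sy)
  have ne2: "e2 \<noteq> e1" using ne by auto
  let ?d = "det2 B"
  have i11: "inv2 B e1 e1 = B e2 e2 / ?d" and i22: "inv2 B e2 e2 = B e1 e1 / ?d"
    and i12: "inv2 B e1 e2 = - B e1 e2 / ?d" and i21: "inv2 B e2 e1 = - B e1 e2 / ?d"
    unfolding inv2_def oth_def using eB ne ne2 s by auto
  have dd: "B e1 e1 * B e2 e2 - B e1 e2 * B e1 e2 = ?d" unfolding det2_def ..
  have L: "(\<Sum>k\<in>Basis. inv2 B e1 k * B k e1) = 1" "(\<Sum>k\<in>Basis. inv2 B e1 k * B k e2) = 0"
     "(\<Sum>k\<in>Basis. inv2 B e2 k * B k e1) = 0" "(\<Sum>k\<in>Basis. inv2 B e2 k * B k e2) = 1"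
    unfolding sumB i11 i12 i21 i22 s using dn
    by (simp_all only: frac2, simp_all add: dd[symmetric] algebra_simps)
  have R: "(\<Sum>k\<in>Basis. B e1 k * inv2 B k e1) = 1" "(\<Sum>k\<in>Basis. B e1 k * inv2 B k e2) = 0"
     "(\<Sum>k\<in>Basis. B e2 k * inv2 B k e1) = 0" "(\<Sum>k\<in>Basis. B e2 k * inv2 B k e2) = 1"
    unfolding sumB i11 i12 i21 i22 s using dn
    by (simp_all only: frac2', simp_all add: dd[symmetric] algebra_simps)
  show "\<forall>i\<in>Basis. \<forall>j\<in>Basis. (\<Sum>k\<in>Basis. inv2 B i k * B k j) = (if i = j then 1 else 0)"
  proof (intro ballI)
    fix i j :: 'a assume "i \<in> Basis" "j \<in> Basis"
    then have "i = e1 \<or> i = e2" "j = e1 \<or> j = e2" using b by auto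
    then show "(\<Sum>k\<in>Basis. inv2 B i k * B k j) = (if i = j then 1 else 0)" using L ne ne2 by auto
  qed
  show "\<forall>i\<in>Basis. \<forall>j\<in>Basis. (\<Sum>k\<in>Basis. B i k * inv2 B k j) = (if i = j then 1 else 0)"
  proof (intro ballI)
    fix i j :: 'a assume "i \<in> Basis" "j \<in> Basis"
    then have "i = e1 \<or> i = e2" "j = e1 \<or> j = e2" using b by auto
    then show "(\<Sum>k\<in>Basis. B i k * inv2 B k j) = (if i = j then 1 else 0)" using R ne ne2 by auto
  qed
  show "\<And>i j. inv2 B i j = inv2 B j i" unfolding inv2_def using sy by auto
  show "\<And>i j. i \<notin> Basis \<or> j \<notin> Basis \<Longrightarrow> inv2 B i j = 0" unfolding inv2_def by auto
qed

end


lemma BasisV_xi: "(1::real, 0::'a::euclidean_space) \<in> Basis"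
  unfolding Basis_prod_def by auto
lemma BasisV_tan: "((0::real, b::'a::euclidean_space) \<in> Basis) \<longleftrightarrow> b \<in> Basis"
  unfolding Basis_prod_def by auto
lemma BasisV_cases: "(I::real \<times> 'a::euclidean_space) \<in> Basis \<Longrightarrow> I = (1, 0) \<or> (fst I = 0 \<and> snd I \<in> Basis)"
  unfolding Basis_prod_def by auto

context S1ctx begin

definition Gg :: "real \<Rightarrow> 'a \<Rightarrow> 'a \<Rightarrow> 'a \<Rightarrow> real" where "Gg T p a b = g (T, p) (0, a) (0, b)"
definition Cg :: "real \<Rightarrow> 'a \<Rightarrow> real \<times> 'a \<Rightarrow> real \<times> 'a \<Rightarrow> real" where
  "Cg T p I K = (if I = (1, 0) \<and> K = (1, 0) then 1 else if fst I = 0 \<and> fst K = 0 then inv2 (Gg T p) (snd I) (snd K) else 0)"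

lemma Gg_eq: "Gg T p a b = cos (2 * T) * h p a b - sin (2 * T) * h p a (J p b)"
  unfolding Gg_def s1_metric_def by simp

lemma Gg_sym: assumes p: "p \<in> U" shows "Gg T p a b = Gg T p b a"
  unfolding Gg_eq using hsym[OF p, of a b] hsym[OF p, of a "J p b"] hJ_swap[OF p, of b a] by simp

lemma Gg_bil: assumes p: "p \<in> U" shows "bilinear (Gg T p)"
  unfolding bilinear_def Gg_eq
  using p by (auto intro!: linearI simp: algebra_simps)

lemma Gg_nd: assumes p: "p \<in> U" and z: "\<And>w. Gg T p v w = 0" shows "v = 0"
proof -
  have "g (T, p) (0, v) W = 0" for W
    using z[of "snd W"] unfolding Gg_def s1_metric_def by simp
  then have "(0::real, v) = 0" by (rule g_nd[OF p])
  then show ?thesis by (simp add: zero_prod_def)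
qed

lemma Gg_det: assumes p: "p \<in> U" shows "det2 (Gg T p) \<noteq> 0"
  by (rule det2_nz[OF Gg_bil[OF p] Gg_sym[OF p] Gg_nd[OF p]])


lemma g_xi_xi: "p \<in> U \<Longrightarrow> g (T, p) (1, 0) (1, 0) = 1" unfolding s1_metric_def by simp
lemma g_xi_tan: "p \<in> U \<Longrightarrow> g (T, p) (1, 0) (0, b) = 0" unfolding s1_metric_def by simp
lemma g_tan_xi: "p \<in> U \<Longrightarrow> g (T, p) (0, b) (1, 0) = 0" unfolding s1_metric_def by simp
lemma g_tan_tan: "g (T, p) (0, a) (0, b) = Gg T p a b" unfolding Gg_def ..

lemma Cg_simps:
  "Cg T p (1, 0) (1, 0) = 1" "Cg T p (1, 0) (0, b) = 0" "Cg T p (0, b) (1, 0) = 0"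
  "Cg T p (0, a) (0, b) = inv2 (Gg T p) a b"
  unfolding Cg_def by auto

lemma gram_inv_g: assumes p: "p \<in> U" shows "gram_inv g (T, p) = Cg T p"
proof (rule gram_inv_eq)
  note GP = inv2_props[OF Gg_sym[OF p, of T] Gg_det[OF p, of T]]
  note L = GP(1) and R = GP(2) and Z = GP(4)
  show "\<forall>i\<in>Basis. \<forall>j\<in>Basis. (\<Sum>k\<in>Basis. Cg T p i k * g (T, p) k j) = (if i = j then 1 else 0)"
  proof (intro ballI)
    fix I K :: "real \<times> 'a" assume I: "I \<in> Basis" and K: "K \<in> Basis"
    show "(\<Sum>k\<in>Basis. Cg T p I k * g (T, p) k K) = (if I = K then 1 else 0)"
      using BasisV_cases[OF I] BasisV_cases[OF K]
    proof (elim disjE conjE)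
      assume "I = (1, 0)" "K = (1, 0)" then show ?thesis
        using p by (simp add: sum_Basis_real_prod Cg_simps g_xi_xi)
    next
      assume "I = (1, 0)" "fst K = 0" "snd K \<in> Basis" then show ?thesis
        using p by (cases K) (simp add: sum_Basis_real_prod Cg_simps g_xi_tan)
    next
      assume "fst I = 0" "snd I \<in> Basis" "K = (1, 0)" then show ?thesis
        using p by (cases I) (simp add: sum_Basis_real_prod Cg_simps g_tan_xi)
    next
      assume a: "fst I = 0" "snd I \<in> Basis" "fst K = 0" "snd K \<in> Basis" then show ?thesis
        using p L by (cases I, cases K) (simp add: sum_Basis_real_prod Cg_simps g_tan_xi g_tan_tan)
    qed
  qed
  show "\<forall>i\<in>Basis. \<forall>j\<in>Basis. (\<Sum>k\<in>Basis. g (T, p) i k * Cg T p k j) = (if i = j then 1 else 0)"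
  proof (intro ballI)
    fix I K :: "real \<times> 'a" assume I: "I \<in> Basis" and K: "K \<in> Basis"
    show "(\<Sum>k\<in>Basis. g (T, p) I k * Cg T p k K) = (if I = K then 1 else 0)"
      using BasisV_cases[OF I] BasisV_cases[OF K]
    proof (elim disjE conjE)
      assume "I = (1, 0)" "K = (1, 0)" then show ?thesis
        using p by (simp add: sum_Basis_real_prod Cg_simps g_xi_xi g_xi_tan)
    next
      assume "I = (1, 0)" "fst K = 0" "snd K \<in> Basis" then show ?thesis
        using p by (cases K) (simp add: sum_Basis_real_prod Cg_simps g_xi_tan)
    next
      assume "fst I = 0" "snd I \<in> Basis" "K = (1, 0)" then show ?thesis
        using p by (cases I) (simp add: sum_Basis_real_prod Cg_simps g_tan_xi)
    next
      assume a: "fst I = 0" "snd I \<in> Basis" "fst K = 0" "snd K \<in> Basis" then show ?thesis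
        using p R by (cases I, cases K) (simp add: sum_Basis_real_prod Cg_simps g_tan_xi g_tan_tan)
    qed
  qed
  show "\<forall>i j. i \<notin> Basis \<or> j \<notin> Basis \<longrightarrow> Cg T p i j = 0"
  proof (intro allI impI)
    fix I K :: "real \<times> 'a" assume o: "I \<notin> Basis \<or> K \<notin> Basis"
    show "Cg T p I K = 0"
    proof (cases "fst I = 0 \<and> fst K = 0")
      case True
      then have "snd I \<notin> Basis \<or> snd K \<notin> Basis" using o BasisV_tan[of "snd I"] BasisV_tan[of "snd K"]
        by (cases I, cases K) auto
      then show ?thesis using True Z unfolding Cg_def by auto
    next
      case False
      then show ?thesis using o BasisV_xi unfolding Cg_def by auto
    qed
  qed
qed

lemma mtrace_g: assumes p: "p \<in> U"
  shows "mtrace g (T, p) B = B (1, 0) (1, 0) + (\<Sum>a\<in>Basis. \<Sum>b\<in>Basis. inv2 (Gg T p) a b * B (0, a) (0, b))"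
  unfolding mtrace_def gram_inv_g[OF p]
  by (simp add: sum_Basis_real_prod Cg_simps)

end


context S1ctx begin

lemma Gg_lin2: assumes p: "p \<in> U" shows "Gg T p a v = (v \<bullet> e1) * Gg T p a e1 + (v \<bullet> e2) * Gg T p a e2"
proof -
  have b: "bilinear (Gg T p)" by (rule Gg_bil[OF p])
  have "Gg T p a v = Gg T p a ((v \<bullet> e1) *\<^sub>R e1 + (v \<bullet> e2) *\<^sub>R e2)" by (simp only: vec2[symmetric])
  also have "\<dots> = (v \<bullet> e1) * Gg T p a e1 + (v \<bullet> e2) * Gg T p a e2"
    using b by (simp add: bilinear_radd bilinear_rmul)
  finally show ?thesis .
qed

lemma contract: assumes p: "p \<in> U" and i: "i \<in> Basis"
  shows "(\<Sum>a\<in>Basis. inv2 (Gg T p) a i * Gg T p a v) = v \<bullet> i"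
proof -
  note GP = inv2_props[OF Gg_sym[OF p, of T] Gg_det[OF p, of T]]
  have d: "(\<Sum>a\<in>Basis. inv2 (Gg T p) a i * Gg T p a e) = (if i = e then 1 else 0)" if e: "e \<in> Basis" for e
  proof -
    have "(\<Sum>a\<in>Basis. inv2 (Gg T p) a i * Gg T p a e) = (\<Sum>a\<in>Basis. inv2 (Gg T p) i a * Gg T p a e)"
      using GP(3) by simp
    also have "\<dots> = (if i = e then 1 else 0)" using GP(1) i e by simp
    finally show ?thesis .
  qed
  have "(\<Sum>a\<in>Basis. inv2 (Gg T p) a i * Gg T p a v) =
      (v \<bullet> e1) * (\<Sum>a\<in>Basis. inv2 (Gg T p) a i * Gg T p a e1) + (v \<bullet> e2) * (\<Sum>a\<in>Basis. inv2 (Gg T p) a i * Gg T p a e2)"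
    by (simp add: Gg_lin2[OF p, of T _ v] sum_distrib_left sum.distrib algebra_simps)
  also have "\<dots> = v \<bullet> i" using d[OF eB(1)] d[OF eB(2)] i B2 ne by auto
  finally show ?thesis .
qed

definition tr :: "('a \<Rightarrow> 'a) \<Rightarrow> real" where "tr M = M e1 \<bullet> e1 + M e2 \<bullet> e2"

lemma T1: assumes p: "p \<in> U"
  shows "(\<Sum>a\<in>Basis. \<Sum>b\<in>Basis. inv2 (Gg T p) a b * Gg T p a (M b)) = tr M"
proof -
  have "(\<Sum>a\<in>Basis. \<Sum>b\<in>Basis. inv2 (Gg T p) a b * Gg T p a (M b)) =
      (\<Sum>b\<in>Basis. \<Sum>a\<in>Basis. inv2 (Gg T p) a b * Gg T p a (M b))" by (rule sum.swap)
  also have "\<dots> = (\<Sum>b\<in>Basis. M b \<bullet> b)" by (rule sum.cong[OF refl]) (rule contract[OF p])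
  also have "\<dots> = tr M" unfolding tr_def sumB ..
  finally show ?thesis .
qed

lemma T3: assumes p: "p \<in> U"
  shows "(\<Sum>a\<in>Basis. \<Sum>b\<in>Basis. inv2 (Gg T p) a b * (\<Sum>c\<in>Basis. \<Sum>d\<in>Basis. inv2 (Gg T p) c d * (Gg T p a (M b) * Gg T p c (N d))))
    = tr M * tr N"
proof -
  have "(\<Sum>a\<in>Basis. \<Sum>b\<in>Basis. inv2 (Gg T p) a b * (\<Sum>c\<in>Basis. \<Sum>d\<in>Basis. inv2 (Gg T p) c d * (Gg T p a (M b) * Gg T p c (N d))))
     = (\<Sum>a\<in>Basis. \<Sum>b\<in>Basis. inv2 (Gg T p) a b * Gg T p a (M b)) * (\<Sum>c\<in>Basis. \<Sum>d\<in>Basis. inv2 (Gg T p) c d * Gg T p c (N d))"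
    by (simp add: sumB algebra_simps)
  then show ?thesis using T1[OF p] by simp
qed

lemma T2: assumes p: "p \<in> U" and lM: "linear M"
  shows "(\<Sum>a\<in>Basis. \<Sum>b\<in>Basis. inv2 (Gg T p) a b * (\<Sum>c\<in>Basis. \<Sum>d\<in>Basis. inv2 (Gg T p) c d * (Gg T p c (M b) * Gg T p a (N d))))
    = tr (\<lambda>u. M (N u))"
proof -
  let ?G = "inv2 (Gg T p)" and ?B = "Gg T p"
  have "(\<Sum>a\<in>Basis. \<Sum>b\<in>Basis. ?G a b * (\<Sum>c\<in>Basis. \<Sum>d\<in>Basis. ?G c d * (?B c (M b) * ?B a (N d))))
     = (\<Sum>c\<in>Basis. \<Sum>d\<in>Basis. ?G c d * (\<Sum>b\<in>Basis. ?B c (M b) * (\<Sum>a\<in>Basis. ?G a b * ?B a (N d))))"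
    by (simp add: sumB algebra_simps)
  also have "\<dots> = (\<Sum>c\<in>Basis. \<Sum>d\<in>Basis. ?G c d * (\<Sum>b\<in>Basis. ?B c (M b) * (N d \<bullet> b)))"
    using contract[OF p] by simp
  also have "\<dots> = (\<Sum>c\<in>Basis. \<Sum>d\<in>Basis. ?G c d * ?B c (M (N d)))"
  proof -
    have "(\<Sum>b\<in>Basis. ?B c (M b) * (v \<bullet> b)) = ?B c (M v)" for c v
    proof -
      have "?B c (M v) = ?B c (M ((v \<bullet> e1) *\<^sub>R e1 + (v \<bullet> e2) *\<^sub>R e2))" by (simp only: vec2[symmetric])
      also have "\<dots> = (v \<bullet> e1) * ?B c (M e1) + (v \<bullet> e2) * ?B c (M e2)"
        using Gg_bil[OF p, of T] lM by (simp add: linear_add linear_scale bilinear_radd bilinear_rmul)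
      finally show ?thesis by (simp add: sumB algebra_simps)
    qed
    then show ?thesis by simp
  qed
  also have "\<dots> = tr (\<lambda>u. M (N u))" by (rule T1[OF p])
  finally show ?thesis .
qed

lemma tr_J: assumes p: "p \<in> U" shows "tr (J p) = 0"
proof -
  obtain a b where r1: "J p e1 = a *\<^sub>R e1 + b *\<^sub>R e2" and ra: "a = J p e1 \<bullet> e1" by (metis vec2)
  obtain c d where r2: "J p e2 = c *\<^sub>R e1 + d *\<^sub>R e2" and rd: "d = J p e2 \<bullet> e2" by (metis vec2)
  have "- e1 = J p (J p e1)" using p by simp
  also have "\<dots> = J p (a *\<^sub>R e1 + b *\<^sub>R e2)" by (simp only: r1)
  also have "\<dots> = a *\<^sub>R J p e1 + b *\<^sub>R J p e2" using p by simp
  also have "\<dots> = a *\<^sub>R (a *\<^sub>R e1 + b *\<^sub>R e2) + b *\<^sub>R (c *\<^sub>R e1 + d *\<^sub>R e2)" by (simp only: r1 r2)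
  finally have q1: "- e1 = a *\<^sub>R (a *\<^sub>R e1 + b *\<^sub>R e2) + b *\<^sub>R (c *\<^sub>R e1 + d *\<^sub>R e2)" .
  have c1: "- 1 = a * a + b * c" and c2: "0 = a * b + b * d"
    using arg_cong[OF q1, of "\<lambda>u. u \<bullet> e1"] arg_cong[OF q1, of "\<lambda>u. u \<bullet> e2"]
    by (simp_all add: inner_add_left)
  have t: "tr (J p) = a + d" unfolding tr_def ra rd ..
  show ?thesis unfolding t
  proof (rule ccontr)
    assume n: "a + d \<noteq> 0"
    have "b * (a + d) = 0" using c2 by (simp add: algebra_simps)
    then have "b = 0" using n by simp
    then have "- 1 = a * a" using c1 by simp
    moreover have "a * a \<ge> 0" by simp
    ultimately show False by linarith
  qed
qed

end


context S1ctx begin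

lemma curv_h_val: assumes p: "p \<in> U"
  shows "h p (curv_op h (\<lambda>_. c) (\<lambda>_. a) (\<lambda>_. b) p) w = k' * (h p a b * h p c w - h p c b * h p a w)"
  using CS p unfolding const_sec_curv_def curv_def by blast

lemma V1: assumes p: "p \<in> U"
  shows "curv g (T, p) (0, c) (0, a) (0, b) (0, d) =
    k' * (Gg T p a (cos (2 * T) *\<^sub>R b + sin (2 * T) *\<^sub>R J p b) * Gg T p c d
        - Gg T p c (cos (2 * T) *\<^sub>R b + sin (2 * T) *\<^sub>R J p b) * Gg T p a d)
    - Gg T p a (J p b) * Gg T p c (J p d) + Gg T p c (J p b) * Gg T p a (J p d)"
proof -
  let ?C = "cos (2 * T)" and ?S = "sin (2 * T)"
  have sc: "cos (T * 2) * cos (T * 2) + sin (T * 2) * sin (T * 2) = 1" by (rule sin_cos_squared_add3)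
  have l: "curv g (T, p) (0, c) (0, a) (0, b) (0, d) =
    ?C * h p (snd (curv_op g (\<lambda>_. (0, c)) (\<lambda>_. (0, a)) (\<lambda>_. (0, b)) (T, p))) d
    - ?S * h p (snd (curv_op g (\<lambda>_. (0, c)) (\<lambda>_. (0, a)) (\<lambda>_. (0, b)) (T, p))) (J p d)"
    unfolding curv_def s1_metric_def by simp
  show ?thesis
    unfolding l curv_tan[OF p] Gg_eq Acoef_def
    using p apply (simp add: curv_h_val hJ_swap algebra_simps)
    using sc by algebra
qed


lemma V1J: assumes p: "p \<in> U"
  shows "curv g (T, p) (0, c) (0, a) (0, J p b) (0, J p d) =
    k' * (Gg T p a (- sin (2 * T) *\<^sub>R b + cos (2 * T) *\<^sub>R J p b) * Gg T p c (J p d)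
        - Gg T p c (- sin (2 * T) *\<^sub>R b + cos (2 * T) *\<^sub>R J p b) * Gg T p a (J p d))
    - Gg T p a b * Gg T p c d + Gg T p c b * Gg T p a d"
proof -
  have e: "cos (2 * T) *\<^sub>R J p b + sin (2 * T) *\<^sub>R J p (J p b) = - sin (2 * T) *\<^sub>R b + cos (2 * T) *\<^sub>R J p b"
    using p by simp
  have n: "Gg T p u (- v) = - Gg T p u v" for u v
    unfolding Gg_eq using p by simp
  show ?thesis unfolding V1[OF p] e using p by (simp add: n)
qed

lemma V2: assumes p: "p \<in> U"
  shows "curv g (T, p) (1, 0) (0, a) (0, b) (1, 0) = Gg T p a b"
proof -
  have "curv g (T, p) (1, 0) (0, a) (0, b) (1, 0) = fst (curv_op g (\<lambda>_. (1, 0)) (\<lambda>_. (0, a)) (\<lambda>_. (0, b)) (T, p))"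
    unfolding curv_def s1_metric_def using p by simp
  then show ?thesis using curv_m1[OF p] Gg_eq by simp
qed

lemma V3: assumes p: "p \<in> U"
  shows "curv g (T, p) (0, c) (1, 0) (1, 0) (0, d) = Gg T p c d"
  unfolding curv_def Gg_eq using curv_m2[OF p, of c T] unfolding s1_metric_def by simp

lemma V4: assumes p: "p \<in> U" shows "curv g (T, p) X Y (0, 0) W = 0"
  unfolding curv_def curv_Z0[OF p] s1_metric_def using p by (simp add: zero_prod_def)

lemma V5: assumes p: "p \<in> U" shows "curv g (T, p) (1, 0) (1, 0) (1, 0) W = 0"
  unfolding curv_def curv_xixi[OF p] s1_metric_def using p by (simp add: zero_prod_def)

lemma V6: assumes p: "p \<in> U" shows "curv g (T, p) X Y Z (0, 0) = 0"
  unfolding curv_def s1_metric_def using p by simp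

lemma tr_L: assumes p: "p \<in> U" shows "tr (\<lambda>u. \<alpha> *\<^sub>R u + \<beta> *\<^sub>R J p u) = 2 * \<alpha>"
proof -
  have "tr (\<lambda>u. \<alpha> *\<^sub>R u + \<beta> *\<^sub>R J p u) = 2 * \<alpha> + \<beta> * tr (J p)"
    unfolding tr_def by (simp add: inner_add_left algebra_simps)
  then show ?thesis using tr_J[OF p] by simp
qed

lemma tr_id: "tr (\<lambda>u. u) = 2" unfolding tr_def by simp

lemma sum_split:
  fixes G F P1 P2 P3 P4 :: "'a \<Rightarrow> 'a \<Rightarrow> real"
  shows "(\<Sum>a\<in>S. \<Sum>b\<in>S. G a b * (F a b + (\<Sum>c\<in>S. \<Sum>d\<in>S. G c d * (k * (Q1 a b c d - Q2 a b c d) - Q3 a b c d + Q4 a b c d))))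
   = (\<Sum>a\<in>S. \<Sum>b\<in>S. G a b * F a b)
     + k * ((\<Sum>a\<in>S. \<Sum>b\<in>S. G a b * (\<Sum>c\<in>S. \<Sum>d\<in>S. G c d * Q1 a b c d))
          - (\<Sum>a\<in>S. \<Sum>b\<in>S. G a b * (\<Sum>c\<in>S. \<Sum>d\<in>S. G c d * Q2 a b c d)))
     - (\<Sum>a\<in>S. \<Sum>b\<in>S. G a b * (\<Sum>c\<in>S. \<Sum>d\<in>S. G c d * Q3 a b c d))
     + (\<Sum>a\<in>S. \<Sum>b\<in>S. G a b * (\<Sum>c\<in>S. \<Sum>d\<in>S. G c d * Q4 a b c d))"
  by (simp add: sum.distrib sum_subtractf sum_distrib_left algebra_simps)

end


context S1ctx begin

lemma scal_val: assumes p: "p \<in> U"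
  shows "scal g (T, p) = 2 * (k' * cos (2 * T) + 1)"
proof -
  let ?G = "inv2 (Gg T p)" and ?B = "Gg T p" and ?C = "cos (2 * T)" and ?S = "sin (2 * T)"
  have ric: "ricci g (T, p) y z = curv g (T, p) (1, 0) y z (1, 0)
      + (\<Sum>c\<in>Basis. \<Sum>d\<in>Basis. ?G c d * curv g (T, p) (0, c) y z (0, d))" for y z
    unfolding ricci_def mtrace_g[OF p] ..
  have r0: "ricci g (T, p) (1, 0) (1, 0) = 2"
    unfolding ric V5[OF p] V3[OF p] using T1[OF p, of T "\<lambda>u. u"] tr_id by simp
  have r1: "ricci g (T, p) (0, a) (0, b) = ?B a b + (\<Sum>c\<in>Basis. \<Sum>d\<in>Basis. ?G c d *
     (k' * (?B a (?C *\<^sub>R b + ?S *\<^sub>R J p b) * ?B c d - ?B c (?C *\<^sub>R b + ?S *\<^sub>R J p b) * ?B a d)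
      - ?B a (J p b) * ?B c (J p d) + ?B c (J p b) * ?B a (J p d)))" for a b
    unfolding ric V2[OF p] V1[OF p] ..
  have "scal g (T, p) = 2 + (\<Sum>a\<in>Basis. \<Sum>b\<in>Basis. ?G a b * ricci g (T, p) (0, a) (0, b))"
    unfolding scal_def mtrace_g[OF p] r0 ..
  also have "\<dots> = 2 + ((\<Sum>a\<in>Basis. \<Sum>b\<in>Basis. ?G a b * ?B a b)
     + k' * ((\<Sum>a\<in>Basis. \<Sum>b\<in>Basis. ?G a b * (\<Sum>c\<in>Basis. \<Sum>d\<in>Basis. ?G c d * (?B a (?C *\<^sub>R b + ?S *\<^sub>R J p b) * ?B c d)))
          - (\<Sum>a\<in>Basis. \<Sum>b\<in>Basis. ?G a b * (\<Sum>c\<in>Basis. \<Sum>d\<in>Basis. ?G c d * (?B c (?C *\<^sub>R b + ?S *\<^sub>R J p b) * ?B a d))))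
     - (\<Sum>a\<in>Basis. \<Sum>b\<in>Basis. ?G a b * (\<Sum>c\<in>Basis. \<Sum>d\<in>Basis. ?G c d * (?B a (J p b) * ?B c (J p d))))
     + (\<Sum>a\<in>Basis. \<Sum>b\<in>Basis. ?G a b * (\<Sum>c\<in>Basis. \<Sum>d\<in>Basis. ?G c d * (?B c (J p b) * ?B a (J p d)))))"
    unfolding r1 by (subst sum_split) (rule refl)
  also have "\<dots> = 2 + (2 + k' * (2 * ?C * 2 - 2 * ?C) - 0 + (- 2))"
  proof -
    have a: "(\<Sum>a\<in>Basis. \<Sum>b\<in>Basis. ?G a b * ?B a b) = 2"
      using T1[OF p, of T "\<lambda>u. u"] tr_id by simp
    have b: "(\<Sum>a\<in>Basis. \<Sum>b\<in>Basis. ?G a b * (\<Sum>c\<in>Basis. \<Sum>d\<in>Basis. ?G c d * (?B a (?C *\<^sub>R b + ?S *\<^sub>R J p b) * ?B c d))) = 2 * ?C * 2"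
      using T3[OF p, of T "\<lambda>u. ?C *\<^sub>R u + ?S *\<^sub>R J p u" "\<lambda>u. u"] tr_L[OF p] tr_id by simp
    have c: "(\<Sum>a\<in>Basis. \<Sum>b\<in>Basis. ?G a b * (\<Sum>c\<in>Basis. \<Sum>d\<in>Basis. ?G c d * (?B c (?C *\<^sub>R b + ?S *\<^sub>R J p b) * ?B a d))) = 2 * ?C"
    proof -
      have l: "linear (\<lambda>u. ?C *\<^sub>R u + ?S *\<^sub>R J p u)" using p by (intro linearI) (simp_all add: algebra_simps)
      show ?thesis using T2[OF p l, of T "\<lambda>u. u"] tr_L[OF p] by simp
    qed
    have d: "(\<Sum>a\<in>Basis. \<Sum>b\<in>Basis. ?G a b * (\<Sum>c\<in>Basis. \<Sum>d\<in>Basis. ?G c d * (?B a (J p b) * ?B c (J p d)))) = 0"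
      using T3[OF p, of T "J p" "J p"] tr_J[OF p] by simp
    have e: "(\<Sum>a\<in>Basis. \<Sum>b\<in>Basis. ?G a b * (\<Sum>c\<in>Basis. \<Sum>d\<in>Basis. ?G c d * (?B c (J p b) * ?B a (J p d)))) = - 2"
    proof -
      have "tr (\<lambda>u. J p (J p u)) = tr (\<lambda>u. (- 1) *\<^sub>R u + 0 *\<^sub>R J p u)" using p by simp
      then have "tr (\<lambda>u. J p (J p u)) = - 2" using tr_L[OF p, of "- 1" 0] by simp
      then show ?thesis using T2[OF p Jlin[OF p], of T "J p"] by simp
    qed
    show ?thesis unfolding a b c d e ..
  qed
  also have "\<dots> = 2 * (k' * ?C + 1)" by (simp add: algebra_simps)
  finally show ?thesis .
qed


lemma tau_val: assumes p: "p \<in> U"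
  shows "tau_ss g (s1_phi J) (T, p) = 2 * (k' * cos (2 * T) - 1)"
proof -
  let ?G = "inv2 (Gg T p)" and ?B = "Gg T p" and ?C = "cos (2 * T)" and ?S = "sin (2 * T)"
  have ph0: "s1_phi J (T, p) (1, 0) = (0, 0)" unfolding s1_phi_def using p by simp
  have ph1: "s1_phi J (T, p) (0, b) = (0, J p b)" for b unfolding s1_phi_def by simp
  have ric: "ricci_star g (s1_phi J) (T, p) y z = curv g (T, p) (1, 0) y z (0, 0)
      + (\<Sum>c\<in>Basis. \<Sum>d\<in>Basis. ?G c d * curv g (T, p) (0, c) y z (0, J p d))" for y z
    unfolding ricci_star_def mtrace_g[OF p] ph0 ph1 ..
  have r0: "ricci_star g (s1_phi J) (T, p) (1, 0) (0, 0) = 0"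
    unfolding ric V4[OF p] by simp
  have r1: "ricci_star g (s1_phi J) (T, p) (0, a) (0, J p b) = 0 + (\<Sum>c\<in>Basis. \<Sum>d\<in>Basis. ?G c d *
     (k' * (?B a (- ?S *\<^sub>R b + ?C *\<^sub>R J p b) * ?B c (J p d) - ?B c (- ?S *\<^sub>R b + ?C *\<^sub>R J p b) * ?B a (J p d))
      - ?B a b * ?B c d + ?B c b * ?B a d))" for a b
    unfolding ric V6[OF p] V1J[OF p] ..
  have "tau_ss g (s1_phi J) (T, p) = (\<Sum>a\<in>Basis. \<Sum>b\<in>Basis. ?G a b * ricci_star g (s1_phi J) (T, p) (0, a) (0, J p b))"
    unfolding tau_ss_def mtrace_g[OF p] ph0 ph1 r0 by simp
  also have "\<dots> = (\<Sum>a\<in>Basis. \<Sum>b\<in>Basis. ?G a b * (\<lambda>a b. 0) a b)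
     + k' * ((\<Sum>a\<in>Basis. \<Sum>b\<in>Basis. ?G a b * (\<Sum>c\<in>Basis. \<Sum>d\<in>Basis. ?G c d * (?B a (- ?S *\<^sub>R b + ?C *\<^sub>R J p b) * ?B c (J p d))))
          - (\<Sum>a\<in>Basis. \<Sum>b\<in>Basis. ?G a b * (\<Sum>c\<in>Basis. \<Sum>d\<in>Basis. ?G c d * (?B c (- ?S *\<^sub>R b + ?C *\<^sub>R J p b) * ?B a (J p d)))))
     - (\<Sum>a\<in>Basis. \<Sum>b\<in>Basis. ?G a b * (\<Sum>c\<in>Basis. \<Sum>d\<in>Basis. ?G c d * (?B a b * ?B c d)))
     + (\<Sum>a\<in>Basis. \<Sum>b\<in>Basis. ?G a b * (\<Sum>c\<in>Basis. \<Sum>d\<in>Basis. ?G c d * (?B c b * ?B a d)))"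
    unfolding r1 by (subst sum_split[where F = "\<lambda>a b. 0"]) (rule refl)
  also have "\<dots> = 0 + k' * (0 - (- 2 * ?C)) - 4 + 2"
  proof -
    have l: "linear (\<lambda>u. - ?S *\<^sub>R u + ?C *\<^sub>R J p u)" using p by (intro linearI) (simp_all add: algebra_simps)
    have lid: "linear (\<lambda>u::'a. u)" by (rule linear_ident)
    have b: "(\<Sum>a\<in>Basis. \<Sum>b\<in>Basis. ?G a b * (\<Sum>c\<in>Basis. \<Sum>d\<in>Basis. ?G c d * (?B a (- ?S *\<^sub>R b + ?C *\<^sub>R J p b) * ?B c (J p d)))) = 0"
      using T3[OF p, of T "\<lambda>u. - ?S *\<^sub>R u + ?C *\<^sub>R J p u" "J p"] tr_J[OF p] by simp
    have c: "(\<Sum>a\<in>Basis. \<Sum>b\<in>Basis. ?G a b * (\<Sum>c\<in>Basis. \<Sum>d\<in>Basis. ?G c d * (?B c (- ?S *\<^sub>R b + ?C *\<^sub>R J p b) * ?B a (J p d)))) = - 2 * ?C"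
    proof -
      have "tr (\<lambda>u. - ?S *\<^sub>R J p u + ?C *\<^sub>R J p (J p u)) = tr (\<lambda>u. (- ?C) *\<^sub>R u + (- ?S) *\<^sub>R J p u)"
        by (rule arg_cong[where f=tr]) (use p in \<open>simp add: fun_eq_iff algebra_simps\<close>)
      also have "\<dots> = 2 * (- ?C)" by (rule tr_L[OF p])
      finally have "tr (\<lambda>u. - ?S *\<^sub>R J p u + ?C *\<^sub>R J p (J p u)) = - 2 * ?C" by simp
      then show ?thesis using T2[OF p l, of T "J p"] by simp
    qed
    have d: "(\<Sum>a\<in>Basis. \<Sum>b\<in>Basis. ?G a b * (\<Sum>c\<in>Basis. \<Sum>d\<in>Basis. ?G c d * (?B a b * ?B c d))) = 4"
      using T3[OF p, of T "\<lambda>u. u" "\<lambda>u. u"] tr_id by simp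
    have e: "(\<Sum>a\<in>Basis. \<Sum>b\<in>Basis. ?G a b * (\<Sum>c\<in>Basis. \<Sum>d\<in>Basis. ?G c d * (?B c b * ?B a d))) = 2"
      using T2[OF p lid, of T "\<lambda>u. u"] tr_id by simp
    show ?thesis unfolding b c d e by simp
  qed
  also have "\<dots> = 2 * (k' * ?C - 1)" by (simp add: algebra_simps)
  finally show ?thesis .
qed

end

theorem corollary4p6:
  fixes U :: "'a::euclidean_space set"
    and h :: "'a \<Rightarrow> 'a \<Rightarrow> 'a \<Rightarrow> real"
    and J :: "'a \<Rightarrow> 'a \<Rightarrow> 'a"
    and k' t :: real and p :: 'a
  assumes "DIM('a) = 2"
    and "almost_norden U h J"
    and "const_sec_curv U h k'"
    and "kaehler_norden U h J"
    and "t > 0" and "p \<in> U"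
  shows "scal (s1_metric h J) (t, p) = 2 * (k' * cos (2 * t) + 1)
    \<and> tau_ss (s1_metric h J) (s1_phi J) (t, p) = 2 * (k' * cos (2 * t) - 1)"
proof -
  have "card (Basis :: 'a set) = 2" using assms(1) by simp
  then obtain e1 e2 :: 'a where B: "Basis = {e1, e2}" and ne: "e1 \<noteq> e2"
    unfolding card_2_iff by blast
  interpret S1ctx U h J e1 e2 k'
    using assms(2,3,4) B ne by unfold_locales
  show ?thesis using scal_val[OF assms(6)] tau_val[OF assms(6)] by simp
qed



end
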